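(* For every $D>0$ there exists $R>0$ (depending only on $D$) such that the following holds. Let $(C,S)$ be a right-angled Coxeter system and let $\gamma\in C$ have $D$-bounded product projections. Then every itinerary traversing $\gamma$ is equivalent to an itinerary $\mathcal{U}$ of the form $$\{W_1\},\mathcal{V}_1,\{W_2\},\mathcal{V}_2,\dots,\{W_n\},\mathcal{V}_n$$ (a concatenation, where each $\mathcal{V}_i$ is a possibly empty sequence of walls) such that: (a) $|\mathcal{V}_i|\le R$ for all $i$; (b) every wall in $\mathcal{V}_i$ intersects $W_i$; (c) $W_i\cap W_j=\emptyset$ for all $i\ne j$; (d) every wall $W_i$ intersects at most $R$ other walls of $\mathcal{U}$.
   Context: $(C,S)$ right-angled Coxeter system. Walls: for a reflection $r$ (conjugate of a generator), the set of edges $\{g,gs\}$ of $\mathrm{Cay}(C,S)$ with $gsg^{-1}=r$; these are the hyperplanes of the Davis complex, and two walls intersect if the hyperplanes intersect (for distinct walls, equivalently the reflections commute). A wall separates $\alpha,\beta$ if every edge path from $\alpha$ to $\beta$ uses one of its edges; $\mathbf{W}(\alpha,\beta)$ is the set of separating walls, $\mathbf{W}(\gamma)=\mathbf{W}(\mathrm{id},\gamma)$, with partial order $W<W'$ iff $W$ separates $\alpha$ from $W'$. An itinerary is a sequence of walls $W_1,\dots,W_m$ with edges $e_i\in W_i$ forming a geodesic edge path; it traverses the element represented by the word of edge labels; it joins $\alpha$ to $\beta$ if such a path goes from $\alpha$ to $\beta$. Two itineraries are equivalent if both join some $\alpha$ to some $\beta$. $|\mathcal{V}|$ is the number of walls of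 $\mathcal{V}$. $\gamma$ has $D$-bounded product projections if every pair of disjoint subsets $A,B\subset\mathbf{W}(\gamma)$ such that each element of $A$ is incomparable with each element of $B$ satisfies $\min(|A|,|B|)\le D$. *)

theory Defs
  imports Complex_Main
begin

text \<open>Right-angled Coxeter systems, presented by a set of generators S and a
  commutation graph E on S.  Group elements are equivalence classes of words
  over S modulo the Coxeter relations s s = 1 and s t = t s for E s t.\<close>

inductive_set rstep :: "'a set \<Rightarrow> ('a \<Rightarrow> 'a \<Rightarrow> bool) \<Rightarrow> ('a list \<times> 'a list) set"
  for S :: "'a set" and E :: "'a \<Rightarrow> 'a \<Rightarrow> bool" where
  del: "s \<in> S \<Longrightarrow> (xs @ [s, s] @ ys, xs @ ys) \<in> rstep S E"
| swap: "E s t \<Longrightarrow> (xs @ [s, t] @ ys, xs @ [t, s] @ ys) \<in> rstep S E"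

definition weq :: "'a set \<Rightarrow> ('a \<Rightarrow> 'a \<Rightarrow> bool) \<Rightarrow> ('a list \<times> 'a list) set" where
  "weq S E = (rstep S E \<union> (rstep S E)\<inverse>)\<^sup>*"

definition cls :: "'a set \<Rightarrow> ('a \<Rightarrow> 'a \<Rightarrow> bool) \<Rightarrow> 'a list \<Rightarrow> 'a list set" where
  "cls S E u = {v. (u, v) \<in> weq S E}"

definition grp :: "'a set \<Rightarrow> ('a \<Rightarrow> 'a \<Rightarrow> bool) \<Rightarrow> 'a list set set" where
  "grp S E = {cls S E u | u. u \<in> lists S}"

text \<open>(S,E) defines a right-angled Coxeter system: S finite, E a simple graph on S
  (m_st = 2 if E s t, m_st = infinity otherwise).\<close>
definition racs :: "'a set \<Rightarrow> ('a \<Rightarrow> 'a \<Rightarrow> bool) \<Rightarrow> bool" where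
  "racs S E \<longleftrightarrow> finite S \<and> (\<forall>s t. E s t \<longrightarrow> s \<in> S \<and> t \<in> S \<and> s \<noteq> t \<and> E t s)"

text \<open>Reflections: conjugates g s g^-1 of generators (g^-1 is the reversed word).\<close>
definition reflections :: "'a set \<Rightarrow> ('a \<Rightarrow> 'a \<Rightarrow> bool) \<Rightarrow> 'a list set set" where
  "reflections S E = {cls S E (v @ [s] @ rev v) | v s. v \<in> lists S \<and> s \<in> S}"

definition wall :: "'a set \<Rightarrow> ('a \<Rightarrow> 'a \<Rightarrow> bool) \<Rightarrow> 'a list set \<Rightarrow> 'a list set set set" where
  "wall S E r = {{cls S E v, cls S E (v @ [s])} | v s.
      v \<in> lists S \<and> s \<in> S \<and> cls S E (v @ [s] @ rev v) = r}"

definition walls :: "'a set \<Rightarrow> ('a \<Rightarrow> 'a \<Rightarrow> bool) \<Rightarrow> 'a list set set set set" where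
  "walls S E = wall S E ` reflections S E"

definition commute_el :: "'a set \<Rightarrow> ('a \<Rightarrow> 'a \<Rightarrow> bool) \<Rightarrow> 'a list set \<Rightarrow> 'a list set \<Rightarrow> bool" where
  "commute_el S E g h \<longleftrightarrow>
     (\<exists>a\<in>g. \<exists>b\<in>h. a \<in> lists S \<and> b \<in> lists S \<and> cls S E (a @ b) = cls S E (b @ a))"

definition walls_intersect :: "'a set \<Rightarrow> ('a \<Rightarrow> 'a \<Rightarrow> bool) \<Rightarrow>
    'a list set set set \<Rightarrow> 'a list set set set \<Rightarrow> bool" where
  "walls_intersect S E W W' \<longleftrightarrow>
     (\<exists>r\<in>reflections S E. \<exists>r'\<in>reflections S E.
        W = wall S E r \<and> W' = wall S E r' \<and> (r = r' \<or> commute_el S E r r'))"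

definition path_uses :: "'a set \<Rightarrow> ('a \<Rightarrow> 'a \<Rightarrow> bool) \<Rightarrow> 'a list \<Rightarrow> 'a list \<Rightarrow>
    'a list set set set \<Rightarrow> bool" where
  "path_uses S E u v W \<longleftrightarrow>
     (\<exists>i<length v. {cls S E (u @ take i v), cls S E (u @ take (Suc i) v)} \<in> W)"

definition separates :: "'a set \<Rightarrow> ('a \<Rightarrow> 'a \<Rightarrow> bool) \<Rightarrow> 'a list set set set \<Rightarrow>
    'a list set \<Rightarrow> 'a list set \<Rightarrow> bool" where
  "separates S E W \<alpha> \<beta> \<longleftrightarrow>
     (\<forall>u\<in>lists S. \<forall>v\<in>lists S. cls S E u = \<alpha> \<longrightarrow> cls S E (u @ v) = \<beta> \<longrightarrow> path_uses S E u v W)"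

definition sep_walls :: "'a set \<Rightarrow> ('a \<Rightarrow> 'a \<Rightarrow> bool) \<Rightarrow> 'a list set \<Rightarrow> 'a list set \<Rightarrow>
    'a list set set set set" where
  "sep_walls S E \<alpha> \<beta> = {W \<in> walls S E. separates S E W \<alpha> \<beta>}"

definition wall_less :: "'a set \<Rightarrow> ('a \<Rightarrow> 'a \<Rightarrow> bool) \<Rightarrow> 'a list set \<Rightarrow>
    'a list set set set \<Rightarrow> 'a list set set set \<Rightarrow> bool" where
  "wall_less S E \<alpha> W W' \<longleftrightarrow> (\<forall>e\<in>W'. \<forall>x\<in>e. separates S E W \<alpha> x)"

definition bounded_product_projections :: "'a set \<Rightarrow> ('a \<Rightarrow> 'a \<Rightarrow> bool) \<Rightarrow> real \<Rightarrow>
    'a list set \<Rightarrow> bool" where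
  "bounded_product_projections S E D \<gamma> \<longleftrightarrow>
     (\<forall>A B. A \<subseteq> sep_walls S E (cls S E []) \<gamma> \<longrightarrow> B \<subseteq> sep_walls S E (cls S E []) \<gamma> \<longrightarrow>
        A \<inter> B = {} \<longrightarrow>
        (\<forall>a\<in>A. \<forall>b\<in>B. \<not> wall_less S E (cls S E []) a b \<and> \<not> wall_less S E (cls S E []) b a) \<longrightarrow>
        real (min (card A) (card B)) \<le> D)"

definition realizes :: "'a set \<Rightarrow> ('a \<Rightarrow> 'a \<Rightarrow> bool) \<Rightarrow> 'a list set set set list \<Rightarrow>
    'a list \<Rightarrow> 'a list \<Rightarrow> bool" where
  "realizes S E Ws u w \<longleftrightarrow>
     u \<in> lists S \<and> w \<in> lists S \<and> length w = length Ws \<and>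
     (\<forall>i<length Ws. Ws ! i \<in> walls S E \<and>
        {cls S E (u @ take i w), cls S E (u @ take (Suc i) w)} \<in> Ws ! i) \<and>
     (\<forall>v\<in>lists S. cls S E (u @ v) = cls S E (u @ w) \<longrightarrow> length w \<le> length v)"

definition itinerary :: "'a set \<Rightarrow> ('a \<Rightarrow> 'a \<Rightarrow> bool) \<Rightarrow> 'a list set set set list \<Rightarrow> bool" where
  "itinerary S E Ws \<longleftrightarrow> (\<exists>u w. realizes S E Ws u w)"

definition traverses :: "'a set \<Rightarrow> ('a \<Rightarrow> 'a \<Rightarrow> bool) \<Rightarrow> 'a list set set set list \<Rightarrow>
    'a list set \<Rightarrow> bool" where
  "traverses S E Ws \<gamma> \<longleftrightarrow> (\<exists>u w. realizes S E Ws u w \<and> cls S E w = \<gamma>)"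

definition joins :: "'a set \<Rightarrow> ('a \<Rightarrow> 'a \<Rightarrow> bool) \<Rightarrow> 'a list set set set list \<Rightarrow>
    'a list set \<Rightarrow> 'a list set \<Rightarrow> bool" where
  "joins S E Ws \<alpha> \<beta> \<longleftrightarrow> (\<exists>u w. realizes S E Ws u w \<and> cls S E u = \<alpha> \<and> cls S E (u @ w) = \<beta>)"

definition itin_equiv :: "'a set \<Rightarrow> ('a \<Rightarrow> 'a \<Rightarrow> bool) \<Rightarrow> 'a list set set set list \<Rightarrow>
    'a list set set set list \<Rightarrow> bool" where
  "itin_equiv S E Ws Ws' \<longleftrightarrow> (\<exists>\<alpha> \<beta>. joins S E Ws \<alpha> \<beta> \<and> joins S E Ws' \<alpha> \<beta>)"

end

theory Submission
  imports Defs
begin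


definition sd :: "'b set \<Rightarrow> 'b set \<Rightarrow> 'b set" where "sd A B = (A - B) \<union> (B - A)"

lemma sd_mem[simp]: "x \<in> sd A B \<longleftrightarrow> (x \<in> A) \<noteq> (x \<in> B)" by (auto simp: sd_def)

locale racsl =
  fixes S :: "'a set" and E :: "'a \<Rightarrow> 'a \<Rightarrow> bool"
  assumes symE: "E s t \<Longrightarrow> E t s" and irrE: "\<not> E s s" and ES: "E s t \<Longrightarrow> s \<in> S"
begin

definition eqv (infix "\<approx>" 50) where "x \<approx> y \<longleftrightarrow> (x, y) \<in> weq S E"

lemma ES2: "E s t \<Longrightarrow> t \<in> S" using ES symE by blast

lemma eqv_refl[simp, intro]: "x \<approx> x" unfolding eqv_def weq_def by simp

lemma eqv_sym: "x \<approx> y \<Longrightarrow> y \<approx> x"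
proof -
  assume "x \<approx> y"
  hence "(y, x) \<in> ((rstep S E \<union> (rstep S E)\<inverse>)\<inverse>)\<^sup>*"
    unfolding eqv_def weq_def by (simp add: rtrancl_converseI)
  moreover have "(rstep S E \<union> (rstep S E)\<inverse>)\<inverse> = rstep S E \<union> (rstep S E)\<inverse>" by auto
  ultimately show ?thesis unfolding eqv_def weq_def by simp
qed

lemma eqv_trans[trans]: "x \<approx> y \<Longrightarrow> y \<approx> z \<Longrightarrow> x \<approx> z"
  unfolding eqv_def weq_def by (rule rtrancl_trans)

lemma rstep_ctx: "(x, y) \<in> rstep S E \<Longrightarrow> (p @ x @ q, p @ y @ q) \<in> rstep S E"
proof (induction rule: rstep.induct)
  case (del s xs ys)
  then show ?case using rstep.del[where xs="p @ xs" and ys="ys @ q" and E=E] by simp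
next
  case (swap s t xs ys)
  then show ?case using rstep.swap[where xs="p @ xs" and ys="ys @ q" and S=S] by simp
qed

lemma eqv_ctx: "x \<approx> y \<Longrightarrow> p @ x @ q \<approx> p @ y @ q"
  unfolding eqv_def weq_def
proof (induction rule: rtrancl_induct)
  case base
  then show ?case by simp
next
  case (step y z)
  hence "(p @ y @ q, p @ z @ q) \<in> rstep S E \<union> (rstep S E)\<inverse>"
    using rstep_ctx by blast
  then show ?case by (rule rtrancl_into_rtrancl[OF step.IH])
qed

lemma eqv_app: "a \<approx> a' \<Longrightarrow> b \<approx> b' \<Longrightarrow> a @ b \<approx> a' @ b'"
  using eqv_ctx[of a a' "[]" b] eqv_ctx[of b b' a' "[]"] eqv_trans by auto

lemma eqv_ss: "s \<in> S \<Longrightarrow> [s, s] \<approx> []"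
  using rstep.del[where xs="[]" and ys="[]" and E=E] unfolding eqv_def weq_def by auto

lemma eqv_swap: "E s t \<Longrightarrow> [s, t] \<approx> [t, s]"
  using rstep.swap[where xs="[]" and ys="[]" and S=S] unfolding eqv_def weq_def by auto

lemma eqv_inv: "v \<in> lists S \<Longrightarrow> v @ rev v \<approx> []"
proof (induction v)
  case Nil
  then show ?case by simp
next
  case (Cons a v)
  have "(a # v) @ rev (a # v) = [a] @ (v @ rev v) @ [a]" by simp
  also have "\<dots> \<approx> [a] @ [] @ [a]" using Cons by (intro eqv_ctx) auto
  also have "\<dots> \<approx> []" using Cons eqv_ss by auto
  finally show ?case .
qed

lemma eqv_inv': "v \<in> lists S \<Longrightarrow> rev v @ v \<approx> []"
  using eqv_inv[of "rev v"] by (simp add: in_lists_conv_set)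

lemma cancel_left: "x \<in> lists S \<Longrightarrow> x @ a \<approx> x @ b \<Longrightarrow> a \<approx> b"
proof -
  assume x: "x \<in> lists S" and h: "x @ a \<approx> x @ b"
  have "a \<approx> (rev x @ x) @ a" using eqv_app[OF eqv_sym[OF eqv_inv'[OF x]] eqv_refl] by simp
  also have "\<dots> = rev x @ (x @ a) @ []" by simp
  also have "\<dots> \<approx> rev x @ (x @ b) @ []" using h by (rule eqv_ctx)
  also have "\<dots> = (rev x @ x) @ b" by simp
  also have "\<dots> \<approx> [] @ b" using eqv_app[OF eqv_inv'[OF x] eqv_refl] .
  finally show ?thesis by simp
qed

lemma cancel_right: "x \<in> lists S \<Longrightarrow> a @ x \<approx> b @ x \<Longrightarrow> a \<approx> b"
proof -
  assume x: "x \<in> lists S" and h: "a @ x \<approx> b @ x"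
  have "a \<approx> a @ (x @ rev x)" using eqv_app[OF eqv_refl eqv_sym[OF eqv_inv[OF x]]] by simp
  also have "\<dots> = [] @ (a @ x) @ rev x" by simp
  also have "\<dots> \<approx> [] @ (b @ x) @ rev x" using h by (rule eqv_ctx)
  also have "\<dots> = b @ (x @ rev x)" by simp
  also have "\<dots> \<approx> b @ []" using eqv_app[OF eqv_refl eqv_inv[OF x]] .
  finally show ?thesis by simp
qed

lemma rstep_rev: "(x, y) \<in> rstep S E \<Longrightarrow> (rev x, rev y) \<in> rstep S E"
proof (induction rule: rstep.induct)
  case (del s xs ys)
  then show ?case using rstep.del[where xs="rev ys" and ys="rev xs" and E=E] by simp
next
  case (swap s t xs ys)
  then show ?case using rstep.swap[where s=t and t=s and xs="rev ys" and ys="rev xs" and S=S] symE by simp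
qed

lemma eqv_rev: "x \<approx> y \<Longrightarrow> rev x \<approx> rev y"
  unfolding eqv_def weq_def
proof (induction rule: rtrancl_induct)
  case base
  then show ?case by simp
next
  case (step y z)
  hence "(rev y, rev z) \<in> rstep S E \<union> (rstep S E)\<inverse>"
    using rstep_rev by blast
  then show ?case by (rule rtrancl_into_rtrancl[OF step.IH])
qed

lemma cls_eq_iff: "cls S E x = cls S E y \<longleftrightarrow> x \<approx> y"
proof
  assume "cls S E x = cls S E y"
  moreover have "y \<in> cls S E y" unfolding cls_def using eqv_refl[of y, unfolded eqv_def] by simp
  ultimately show "x \<approx> y" unfolding cls_def eqv_def by blast
next
  assume h: "x \<approx> y"
  show "cls S E x = cls S E y"
    unfolding cls_def using h eqv_sym eqv_trans unfolding eqv_def by blast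
qed

lemma conj_cancel: "g \<in> lists S \<Longrightarrow> g @ a @ rev g \<approx> g @ b @ rev g \<Longrightarrow> a \<approx> b"
  using cancel_left[of g "a @ rev g" "b @ rev g"] cancel_right[of "rev g" a b] by (simp add: in_lists_conv_set)

lemma conj_eqv: "a \<approx> b \<Longrightarrow> g @ a @ rev g \<approx> g @ b @ rev g"
  by (rule eqv_ctx)

section \<open>Reflection parity sets\<close>

fun rs :: "'a list \<Rightarrow> 'a list \<Rightarrow> 'a list set set" where
  "rs u [] = {}"
| "rs u (c # v) = sd {cls S E (u @ [c] @ rev u)} (rs (u @ [c]) v)"

lemma rs_cong_prefix: "u \<approx> u' \<Longrightarrow> rs u v = rs u' v"
proof (induction v arbitrary: u u')
  case Nil
  then show ?case by simp
next
  case (Cons c v)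
  have "u @ [c] @ rev u \<approx> u' @ [c] @ rev u'"
    using Cons.prems by (intro eqv_app eqv_rev) auto
  hence "cls S E (u @ [c] @ rev u) = cls S E (u' @ [c] @ rev u')" by (simp add: cls_eq_iff)
  moreover have "rs (u @ [c]) v = rs (u' @ [c]) v"
    using Cons by (intro Cons.IH eqv_app) auto
  ultimately show ?case by simp
qed

lemma rs_append: "rs u (v @ w) = sd (rs u v) (rs (u @ v) w)"
  by (induction v arbitrary: u) (auto simp: sd_def)

lemma rs_rstep: "(v, v') \<in> rstep S E \<Longrightarrow> rs u v = rs u v'"
proof (induction rule: rstep.induct)
  case (del s xs ys)
  let ?g = "u @ xs"
  have a: "?g @ [s, s, s] @ rev ?g \<approx> ?g @ [s] @ rev ?g"
    using eqv_ctx[OF eqv_app[OF eqv_ss[OF del] eqv_refl[of "[s]"]], of ?g "rev ?g"] by simp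
  have b: "rs (?g @ [s, s]) ys = rs ?g ys"
    using eqv_ctx[OF eqv_ss[OF del], of ?g "[]"] by (intro rs_cong_prefix) simp
  have "rs u (xs @ [s, s] @ ys) = sd (rs u xs) (rs ?g ([s, s] @ ys))" by (simp add: rs_append)
  also have "rs ?g ([s, s] @ ys) = sd {cls S E (?g @ [s] @ rev ?g)}
      (sd {cls S E (?g @ [s, s, s] @ rev ?g)} (rs (?g @ [s, s]) ys))" by simp
  also have "\<dots> = rs ?g ys" using a b by (simp add: cls_eq_iff[symmetric]) (auto simp: sd_def)
  finally show ?case by (simp add: rs_append)
next
  case (swap s t xs ys)
  let ?g = "u @ xs"
  have st: "[s, t] \<approx> [t, s]" using eqv_swap[OF swap] .
  have a: "?g @ [s, t, s] @ rev ?g \<approx> ?g @ [t] @ rev ?g"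
  proof -
    have "[s, t, s] \<approx> [t, s, s]" using eqv_app[OF st eqv_refl[of "[s]"]] by simp
    also have "[t, s, s] \<approx> [t]" using eqv_app[OF eqv_refl[of "[t]"] eqv_ss[OF ES[OF swap]]] by simp
    finally show ?thesis by (rule conj_eqv)
  qed
  have b: "?g @ [t, s, t] @ rev ?g \<approx> ?g @ [s] @ rev ?g"
  proof -
    have "[t, s, t] \<approx> [s, t, t]" using eqv_app[OF eqv_sym[OF st] eqv_refl[of "[t]"]] by simp
    also have "[s, t, t] \<approx> [s]" using eqv_app[OF eqv_refl[of "[s]"] eqv_ss[OF ES2[OF swap]]] by simp
    finally show ?thesis by (rule conj_eqv)
  qed
  have c: "rs (?g @ [s, t]) ys = rs (?g @ [t, s]) ys"
    using eqv_ctx[OF st, of ?g "[]"] by (intro rs_cong_prefix) simp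
  have "rs ?g ([s, t] @ ys) = rs ?g ([t, s] @ ys)"
    using a b c by (simp add: cls_eq_iff[symmetric]) (auto simp: sd_def)
  then show ?case by (simp add: rs_append)
qed

lemma rs_eqv: "v \<approx> v' \<Longrightarrow> rs u v = rs u v'"
  unfolding eqv_def weq_def
proof (induction rule: rtrancl_induct)
  case base
  then show ?case by simp
next
  case (step y z)
  then show ?case using rs_rstep by auto
qed

definition refl_at :: "'a list \<Rightarrow> 'a list \<Rightarrow> nat \<Rightarrow> 'a list set" where
  "refl_at u v i = cls S E (u @ take i v @ [v ! i] @ rev (u @ take i v))"

lemma refl_at_Cons: "refl_at u (c # v) (Suc i) = refl_at (u @ [c]) v i"
  by (simp add: refl_at_def)

lemma refl_at_0: "refl_at u (c # v) 0 = cls S E (u @ [c] @ rev u)"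
  by (simp add: refl_at_def)

lemma rs_mem_ex: "r \<in> rs u v \<Longrightarrow> \<exists>i<length v. refl_at u v i = r"
proof (induction v arbitrary: u)
  case Nil
  then show ?case by simp
next
  case (Cons c v)
  show ?case
  proof (cases "r = cls S E (u @ [c] @ rev u)")
    case True
    then show ?thesis using refl_at_0 by force
  next
    case False
    hence "r \<in> rs (u @ [c]) v" using Cons.prems by simp
    then obtain i where "i < length v" "refl_at (u @ [c]) v i = r" using Cons.IH by blast
    then show ?thesis by (intro exI[of _ "Suc i"]) (simp add: refl_at_Cons)
  qed
qed

lemma rs_distinct:
  "(\<And>i j. i < j \<Longrightarrow> j < length v \<Longrightarrow> refl_at u v i \<noteq> refl_at u v j) \<Longrightarrow>
   rs u v = {refl_at u v i | i. i < length v}"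
proof (induction v arbitrary: u)
  case Nil
  then show ?case by simp
next
  case (Cons c v)
  have ih: "rs (u @ [c]) v = {refl_at (u @ [c]) v i | i. i < length v}"
  proof (rule Cons.IH)
    fix i j assume "i < j" "j < length v"
    then show "refl_at (u @ [c]) v i \<noteq> refl_at (u @ [c]) v j"
      using Cons.prems[of "Suc i" "Suc j"] by (simp add: refl_at_Cons)
  qed
  have nin: "cls S E (u @ [c] @ rev u) \<notin> rs (u @ [c]) v"
  proof
    assume "cls S E (u @ [c] @ rev u) \<in> rs (u @ [c]) v"
    then obtain i where "i < length v" "refl_at (u @ [c]) v i = cls S E (u @ [c] @ rev u)"
      using ih by auto
    then show False using Cons.prems[of 0 "Suc i"] by (simp add: refl_at_Cons refl_at_0)
  qed
  have "rs u (c # v) = insert (cls S E (u @ [c] @ rev u)) (rs (u @ [c]) v)"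
    using nin by (auto simp: sd_def)
  also have "\<dots> = {refl_at u (c # v) i | i. i < length (c # v)}"
  proof -
    have eq: "\<And>(f :: nat \<Rightarrow> 'a list set) n. {f i | i. i < Suc n} = insert (f 0) {f (Suc i) | i. i < n}"
      by (auto simp: less_Suc_eq_0_disj)
    show ?thesis unfolding ih using eq[of "refl_at u (c # v)" "length v"]
      by (simp add: refl_at_Cons refl_at_0)
  qed
  finally show ?case .
qed

definition geo :: "'a list \<Rightarrow> bool" where
  "geo v \<longleftrightarrow> v \<in> lists S \<and> (\<forall>v'\<in>lists S. v' \<approx> v \<longrightarrow> length v \<le> length v')"

lemma geo_lists: "geo v \<Longrightarrow> v \<in> lists S" by (simp add: geo_def)

lemma split3:
  assumes "i < j" "j < length v"
  obtains p c q d rest where "v = p @ [c] @ q @ [d] @ rest" "length p = i" "length q = j - i - 1"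
proof -
  have d1: "drop i v = v ! i # drop (Suc i) v" using assms by (simp add: Cons_nth_drop_Suc)
  have d2: "drop (Suc i) v = take (j - i - 1) (drop (Suc i) v) @ drop (j - i - 1) (drop (Suc i) v)"
    by (rule append_take_drop_id[symmetric])
  have d3: "drop (j - i - 1) (drop (Suc i) v) = drop j v" using assms by simp
  have d4: "drop j v = v ! j # drop (Suc j) v" using assms by (simp add: Cons_nth_drop_Suc)
  have "v = take i v @ drop i v" by simp
  also have "\<dots> = take i v @ [v ! i] @ take (j - i - 1) (drop (Suc i) v) @ [v ! j] @ drop (Suc j) v"
    unfolding d1 by (subst d2, unfold d3 d4) simp
  finally have "v = take i v @ [v ! i] @ take (j - i - 1) (drop (Suc i) v) @ [v ! j] @ drop (Suc j) v" .
  then show ?thesis using assms by (intro that) auto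
qed

lemma geo_distinct:
  assumes g: "geo v" and u: "u \<in> lists S" and ij: "i < j" "j < length v"
  shows "refl_at u v i \<noteq> refl_at u v j"
proof
  assume eq: "refl_at u v i = refl_at u v j"
  obtain p c q d rest where v: "v = p @ [c] @ q @ [d] @ rest" and lp: "length p = i"
    and lq: "length q = j - i - 1"
    using split3[OF ij] by blast
  have vl: "v \<in> lists S" using g geo_lists by auto
  hence pl: "p \<in> lists S" and cS: "c \<in> S" and ql: "q \<in> lists S" and dS: "d \<in> S"
    and rl: "rest \<in> lists S" using v by auto
  have ti: "take i v = p" "v ! i = c" using v lp by auto
  have jj: "j = Suc (length p + length q)" using lp lq ij by simp
  have tj: "take j v = p @ [c] @ q" "v ! j = d" using v jj
    by (auto simp: nth_append)
  have "u @ p @ [c] @ rev (u @ p) \<approx> u @ (p @ [c] @ q) @ [d] @ rev (u @ (p @ [c] @ q))"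
    using eq unfolding refl_at_def ti tj by (simp add: cls_eq_iff)
  hence e1: "(u @ p) @ ([c] @ (rev p @ rev u)) \<approx> (u @ p) @ (([c] @ q @ [d] @ rev q @ [c]) @ (rev p @ rev u))"
    by simp
  have up: "u @ p \<in> lists S" using u pl by simp
  have e2: "[c] @ (rev p @ rev u) \<approx> ([c] @ q @ [d] @ rev q @ [c]) @ (rev p @ rev u)"
    using e1 by (rule cancel_left[OF up])
  have rpu: "rev p @ rev u \<in> lists S" using u pl by (auto simp: in_lists_conv_set)
  have e3': "[c] \<approx> ([c] @ q @ [d] @ rev q @ [c])"
    using e2 by (rule cancel_right[OF rpu])
  have e3: "[] @ [c] \<approx> ([c] @ q @ [d] @ rev q) @ [c]"
    using e3' by simp
  have cl: "[c] \<in> lists S" using cS by simp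
  have h: "[] \<approx> [c] @ q @ [d] @ rev q" using e3 by (rule cancel_right[OF cl])
  have "q \<approx> ([c] @ q @ [d] @ rev q) @ q" using eqv_app[OF h eqv_refl[of q]] by simp
  also have "\<dots> = ([c] @ q @ [d]) @ (rev q @ q)" by simp
  also have "\<dots> \<approx> ([c] @ q @ [d]) @ []" using eqv_app[OF eqv_refl eqv_inv'[OF ql]] .
  finally have "q \<approx> [c] @ q @ [d]" by simp
  hence "p @ q @ rest \<approx> p @ ([c] @ q @ [d]) @ rest" by (rule eqv_ctx)
  hence "p @ q @ rest \<approx> v" using v by simp
  moreover have "p @ q @ rest \<in> lists S" using pl ql rl by simp
  ultimately have "length v \<le> length (p @ q @ rest)" using g unfolding geo_def by blast
  then show False using v by simp
qed

lemma geo_rs: "geo v \<Longrightarrow> u \<in> lists S \<Longrightarrow> rs u v = {refl_at u v i | i. i < length v}"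
  by (rule rs_distinct) (use geo_distinct in blast)

lemma geo_take: "geo v \<Longrightarrow> geo (take i v)"
proof -
  assume g: "geo v"
  have vl: "v \<in> lists S" using g geo_lists by auto
  show "geo (take i v)" unfolding geo_def
  proof (intro conjI ballI impI)
    show "take i v \<in> lists S" using vl by (auto simp: in_lists_conv_set dest: in_set_takeD)
  next
    fix v' assume v': "v' \<in> lists S" "v' \<approx> take i v"
    have "v' @ drop i v \<approx> take i v @ drop i v" using eqv_app[OF v'(2) eqv_refl] .
    hence "v' @ drop i v \<approx> v" by simp
    moreover have "v' @ drop i v \<in> lists S" using v' vl
      by (auto simp: in_lists_conv_set dest: in_set_dropD)
    ultimately have "length v \<le> length (v' @ drop i v)" using g unfolding geo_def by blast
    then show "length (take i v) \<le> length v'" by (cases "i \<le> length v") auto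
  qed
qed

lemma geo_exists: "v \<in> lists S \<Longrightarrow> \<exists>g. geo g \<and> g \<approx> v"
proof -
  assume vl: "v \<in> lists S"
  let ?P = "\<lambda>n. \<exists>g\<in>lists S. g \<approx> v \<and> length g = n"
  have P0: "?P (length v)" using vl by auto
  define n where "n = (LEAST n. ?P n)"
  have n: "?P n" unfolding n_def using P0 by (rule LeastI)
  have least: "\<And>m. ?P m \<Longrightarrow> n \<le> m" unfolding n_def by (rule Least_le)
  from n obtain g where g: "g \<in> lists S" "g \<approx> v" "length g = n" by blast
  have "geo g" unfolding geo_def
  proof (intro conjI ballI impI)
    show "g \<in> lists S" using g by simp
  next
    fix v' assume "v' \<in> lists S" "v' \<approx> g"
    hence "?P (length v')" using g eqv_trans by blast
    then show "length g \<le> length v'" using least g by simp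
  qed
  then show ?thesis using g by blast
qed

lemma rs_conj: "g \<in> lists S \<Longrightarrow> (cls S E (g @ z @ rev g) \<in> rs (g @ u) h) = (cls S E z \<in> rs u h)"
proof (induction h arbitrary: u)
  case Nil
  then show ?case by simp
next
  case (Cons a h)
  have e: "(cls S E (g @ z @ rev g) = cls S E ((g @ u) @ [a] @ rev (g @ u)))
      = (cls S E z = cls S E (u @ [a] @ rev u))"
  proof -
    have "(g @ u) @ [a] @ rev (g @ u) = g @ (u @ [a] @ rev u) @ rev g" by simp
    moreover have "(g @ z @ rev g \<approx> g @ (u @ [a] @ rev u) @ rev g) = (z \<approx> u @ [a] @ rev u)"
      using conj_cancel[OF Cons.prems] conj_eqv by blast
    ultimately show ?thesis by (simp only: cls_eq_iff)
  qed
  have "rs (g @ u @ [a]) h = rs (g @ (u @ [a])) h" by simp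
  then show ?case using e Cons.IH[of "u @ [a]"] Cons.prems by simp
qed

abbreviation NN where "NN v \<equiv> rs [] v"

lemma NN_append: "NN (x @ y) = sd (NN x) (rs x y)"
  using rs_append[of "[]" x y] by simp

section \<open>Walls\<close>

lemma edge_refl_unique:
  assumes "v \<in> lists S" "v' \<in> lists S"
    "{cls S E v, cls S E (v @ [s])} = {cls S E v', cls S E (v' @ [s'])}"
  shows "cls S E (v @ [s] @ rev v) = cls S E (v' @ [s'] @ rev v')"
proof -
  from assms(3) consider "cls S E v = cls S E v'" "cls S E (v @ [s]) = cls S E (v' @ [s'])"
    | "cls S E v = cls S E (v' @ [s'])" "cls S E (v @ [s]) = cls S E v'"
    by (auto simp: doubleton_eq_iff)
  then show ?thesis
  proof cases
    case 1
    hence a: "v \<approx> v'" and b: "v @ [s] \<approx> v' @ [s']" by (simp_all add: cls_eq_iff)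
    have "(v @ [s]) @ rev v \<approx> (v' @ [s']) @ rev v'" using eqv_app[OF b eqv_rev[OF a]] .
    then show ?thesis by (simp add: cls_eq_iff)
  next
    case 2
    hence a: "v \<approx> v' @ [s']" and b: "v @ [s] \<approx> v'" by (simp_all add: cls_eq_iff)
    have "(v @ [s]) @ rev v \<approx> v' @ rev (v' @ [s'])" using eqv_app[OF b eqv_rev[OF a]] .
    then show ?thesis by (simp add: cls_eq_iff)
  qed
qed

lemma edge_in_wall_iff:
  assumes "v \<in> lists S" "s \<in> S"
  shows "{cls S E v, cls S E (v @ [s])} \<in> wall S E r \<longleftrightarrow> cls S E (v @ [s] @ rev v) = r"
proof
  assume "{cls S E v, cls S E (v @ [s])} \<in> wall S E r"
  then obtain v' s' where "v' \<in> lists S" "s' \<in> S" "cls S E (v' @ [s'] @ rev v') = r"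
    "{cls S E v, cls S E (v @ [s])} = {cls S E v', cls S E (v' @ [s'])}"
    unfolding wall_def by blast
  then show "cls S E (v @ [s] @ rev v) = r" using edge_refl_unique assms by metis
next
  assume "cls S E (v @ [s] @ rev v) = r"
  then show "{cls S E v, cls S E (v @ [s])} \<in> wall S E r" using assms unfolding wall_def by blast
qed

lemma wall_inj:
  assumes "r \<in> reflections S E" "wall S E r = wall S E r'"
  shows "r = r'"
proof -
  obtain v s where v: "v \<in> lists S" "s \<in> S" "r = cls S E (v @ [s] @ rev v)"
    using assms(1) unfolding reflections_def by blast
  hence "{cls S E v, cls S E (v @ [s])} \<in> wall S E r" using edge_in_wall_iff by simp
  hence "{cls S E v, cls S E (v @ [s])} \<in> wall S E r'" using assms by simp
  then show ?thesis using edge_in_wall_iff v by simp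
qed

lemma sep_iff:
  assumes r: "r \<in> reflections S E" and x: "x \<in> lists S" and z: "z \<in> lists S"
  shows "separates S E (wall S E r) (cls S E x) (cls S E z) \<longleftrightarrow> r \<in> sd (NN x) (NN z)"
proof
  assume sep: "separates S E (wall S E r) (cls S E x) (cls S E z)"
  have "rev x @ z \<in> lists S" using x z by (auto simp: in_lists_conv_set)
  then obtain g where g: "geo g" "g \<approx> rev x @ z" using geo_exists by blast
  have gl: "g \<in> lists S" using g geo_lists by auto
  have xg: "x @ g \<approx> z"
  proof -
    have "x @ g \<approx> x @ (rev x @ z)" using eqv_app[OF eqv_refl g(2)] .
    also have "\<dots> = (x @ rev x) @ z" by simp
    also have "\<dots> \<approx> [] @ z" using eqv_app[OF eqv_inv[OF x] eqv_refl] .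
    finally show ?thesis by simp
  qed
  have sp: "\<And>u v. u \<in> lists S \<Longrightarrow> v \<in> lists S \<Longrightarrow> cls S E u = cls S E x \<Longrightarrow>
      cls S E (u @ v) = cls S E z \<Longrightarrow> path_uses S E u v (wall S E r)"
    using sep unfolding separates_def by blast
  have "path_uses S E x g (wall S E r)" by (rule sp[OF x gl refl]) (simp add: cls_eq_iff xg)
  then obtain i where i: "i < length g"
    "{cls S E (x @ take i g), cls S E (x @ take (Suc i) g)} \<in> wall S E r"
    unfolding path_uses_def by blast
  have "take (Suc i) g = take i g @ [g ! i]" using i(1) take_Suc_conv_app_nth by blast
  hence ew: "{cls S E (x @ take i g), cls S E ((x @ take i g) @ [g ! i])} \<in> wall S E r" using i by simp
  have xt: "x @ take i g \<in> lists S" using x gl by (auto simp: in_lists_conv_set dest: in_set_takeD)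
  have gi: "g ! i \<in> S" using gl i(1) by (simp add: in_lists_conv_set)
  have "cls S E ((x @ take i g) @ [g ! i] @ rev (x @ take i g)) = r"
    using edge_in_wall_iff[OF xt gi] ew by blast
  hence "refl_at x g i = r" unfolding refl_at_def by simp
  hence "r \<in> rs x g" using geo_rs[OF g(1) x] i(1) by auto
  moreover have "NN z = sd (NN x) (rs x g)" using NN_append[of x g] rs_eqv[OF xg] by simp
  ultimately show "r \<in> sd (NN x) (NN z)" by auto
next
  assume rin: "r \<in> sd (NN x) (NN z)"
  show "separates S E (wall S E r) (cls S E x) (cls S E z)"
    unfolding separates_def
  proof (intro ballI impI)
    fix u v assume u: "u \<in> lists S" and v: "v \<in> lists S"
      and cu: "cls S E u = cls S E x" and cuv: "cls S E (u @ v) = cls S E z"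
    have "NN u = NN x" using cu rs_eqv by (simp add: cls_eq_iff)
    moreover have "NN (u @ v) = NN z" using cuv rs_eqv by (simp add: cls_eq_iff)
    ultimately have "r \<in> rs u v" using rin NN_append[of u v] by auto
    then obtain i where i: "i < length v" "refl_at u v i = r" using rs_mem_ex by blast
    have ts: "take (Suc i) v = take i v @ [v ! i]" using i(1) take_Suc_conv_app_nth by blast
    have ut: "u @ take i v \<in> lists S" using u v by (auto simp: in_lists_conv_set dest: in_set_takeD)
    have vi: "v ! i \<in> S" using v i(1) by (simp add: in_lists_conv_set)
    have "cls S E ((u @ take i v) @ [v ! i] @ rev (u @ take i v)) = r"
      using i(2) unfolding refl_at_def by simp
    hence "{cls S E (u @ take i v), cls S E ((u @ take i v) @ [v ! i])} \<in> wall S E r"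
      using edge_in_wall_iff[OF ut vi] by blast
    hence "{cls S E (u @ take i v), cls S E (u @ take (Suc i) v)} \<in> wall S E r"
      unfolding ts by simp
    then show "path_uses S E u v (wall S E r)" unfolding path_uses_def using i(1) by blast
  qed
qed

lemma ball_doubletons:
  "(\<forall>e\<in>{{f v s, g v s} | v s. P1 v \<and> P2 s \<and> P3 v s}. \<forall>x\<in>e. Q x) \<longleftrightarrow>
    (\<forall>v s. P1 v \<longrightarrow> P2 s \<longrightarrow> P3 v s \<longrightarrow> Q (f v s) \<and> Q (g v s))"
  by blast

lemma wall_less_iff:
  assumes r: "r \<in> reflections S E" and x0: "x0 \<in> lists S"
  shows "wall_less S E (cls S E x0) (wall S E r) (wall S E r') \<longleftrightarrow>
    (\<forall>v s. v \<in> lists S \<longrightarrow> s \<in> S \<longrightarrow> cls S E (v @ [s] @ rev v) = r' \<longrightarrow>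
       r \<in> sd (NN x0) (NN v) \<and> r \<in> sd (NN x0) (NN (v @ [s])))"
proof -
  have "wall_less S E (cls S E x0) (wall S E r) (wall S E r') \<longleftrightarrow>
    (\<forall>v s. v \<in> lists S \<longrightarrow> s \<in> S \<longrightarrow> cls S E (v @ [s] @ rev v) = r' \<longrightarrow>
       separates S E (wall S E r) (cls S E x0) (cls S E v) \<and>
       separates S E (wall S E r) (cls S E x0) (cls S E (v @ [s])))"
    unfolding wall_less_def wall_def by (rule ball_doubletons)
  also have "\<dots> \<longleftrightarrow> (\<forall>v s. v \<in> lists S \<longrightarrow> s \<in> S \<longrightarrow> cls S E (v @ [s] @ rev v) = r' \<longrightarrow>
       r \<in> sd (NN x0) (NN v) \<and> r \<in> sd (NN x0) (NN (v @ [s])))"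
    (is "?L \<longleftrightarrow> ?R")
  proof
    assume L: ?L
    show ?R
    proof (intro allI impI)
      fix v s assume h: "v \<in> lists S" "s \<in> S" "cls S E (v @ [s] @ rev v) = r'"
      have vs: "v @ [s] \<in> lists S" using h by simp
      show "r \<in> sd (NN x0) (NN v) \<and> r \<in> sd (NN x0) (NN (v @ [s]))"
        using L h sep_iff[OF r x0 h(1)] sep_iff[OF r x0 vs] by blast
    qed
  next
    assume R: ?R
    show ?L
    proof (intro allI impI)
      fix v s assume h: "v \<in> lists S" "s \<in> S" "cls S E (v @ [s] @ rev v) = r'"
      have vs: "v @ [s] \<in> lists S" using h by simp
      show "separates S E (wall S E r) (cls S E x0) (cls S E v) \<and>
          separates S E (wall S E r) (cls S E x0) (cls S E (v @ [s]))"
        using R h sep_iff[OF r x0 h(1)] sep_iff[OF r x0 vs] by blast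
    qed
  qed
  finally show ?thesis .
qed

end



lemma sd_empty[simp]: "sd A {} = A" "sd {} A = A" by (auto simp: sd_def)

lemma compr_image: "{f i | i. i < n} = f ` {..<n}" by auto

locale dinf = racsl S E for S :: "'a set" and E +
  fixes a b :: 'a
  assumes aS: "a \<in> S" and bS: "b \<in> S" and ab: "a \<noteq> b" and nEab: "\<not> E a b"
begin

definition pw :: "nat \<Rightarrow> 'a list" where "pw n = concat (replicate n [a, b])"
definition qw :: "nat \<Rightarrow> 'a list" where "qw n = concat (replicate n [b, a])"
definition alt :: "nat \<Rightarrow> 'a list" where "alt n = pw n @ [a]"

lemma pw_0[simp]: "pw 0 = []" by (simp add: pw_def)
lemma qw_0[simp]: "qw 0 = []" by (simp add: qw_def)
lemma pw_Suc: "pw (Suc n) = [a, b] @ pw n" by (simp add: pw_def)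
lemma pw_Suc': "pw (Suc n) = pw n @ [a, b]" by (simp add: pw_def replicate_append_same[symmetric])
lemma qw_Suc: "qw (Suc n) = [b, a] @ qw n" by (simp add: qw_def)
lemma qw_Suc': "qw (Suc n) = qw n @ [b, a]" by (simp add: qw_def replicate_append_same[symmetric])

lemma pw_a: "pw n @ [a] = [a] @ qw n"
  by (induction n) (simp_all add: pw_Suc qw_Suc)

lemma rev_pw: "rev (pw n) = qw n"
  by (induction n) (simp_all add: pw_Suc' qw_Suc)

lemma rev_alt: "rev (alt n) = alt n"
proof -
  have "rev (alt n) = [a] @ rev (pw n)" by (simp add: alt_def)
  also have "\<dots> = pw n @ [a]" by (simp only: rev_pw pw_a)
  finally show ?thesis by (simp add: alt_def)
qed

lemma pw_lists: "pw n \<in> lists S" by (induction n) (simp_all add: pw_Suc aS bS)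
lemma alt_lists: "alt n \<in> lists S" using pw_lists aS by (simp add: alt_def)

lemma alt_inv: "alt n @ alt n \<approx> []"
  using eqv_inv[OF alt_lists[of n]] rev_alt by simp

lemma a_pw_a: "[a] @ pw n @ [a] \<approx> rev (pw n)"
proof -
  have "[a] @ pw n @ [a] = [a, a] @ qw n" using pw_a by simp
  also have "\<dots> \<approx> [] @ qw n" using eqv_app[OF eqv_ss[OF aS] eqv_refl] .
  finally show ?thesis by (simp add: rev_pw)
qed

lemma alt_conj: "alt (Suc n) @ alt n @ alt (Suc n) \<approx> alt (Suc (Suc n))"
proof -
  have "alt (Suc n) @ alt n @ alt (Suc n) = pw (Suc n) @ ([a] @ pw n @ [a]) @ pw (Suc n) @ [a]"
    by (simp add: alt_def)
  also have "\<dots> \<approx> pw (Suc n) @ rev (pw n) @ pw (Suc n) @ [a]"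
    using eqv_ctx[OF a_pw_a] by simp
  also have "\<dots> = pw (Suc n) @ (rev (pw n) @ pw n) @ [a, b] @ [a]" by (simp add: pw_Suc')
  also have "\<dots> \<approx> pw (Suc n) @ [] @ [a, b] @ [a]" using eqv_ctx[OF eqv_inv'[OF pw_lists]] by blast
  also have "\<dots> = alt (Suc (Suc n))" by (simp add: alt_def pw_Suc'[of "Suc n"])
  finally show ?thesis .
qed

lemma alt_conj': "alt (Suc n) @ alt (Suc (Suc n)) @ alt (Suc n) \<approx> alt n"
proof -
  have "alt (Suc n) @ alt (Suc (Suc n)) @ alt (Suc n) \<approx> alt (Suc n) @ (alt (Suc n) @ alt n @ alt (Suc n)) @ alt (Suc n)"
    using eqv_ctx[OF eqv_sym[OF alt_conj]] by blast
  also have "\<dots> = (alt (Suc n) @ alt (Suc n)) @ alt n @ (alt (Suc n) @ alt (Suc n))" by simp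
  also have "\<dots> \<approx> [] @ alt n @ []" using eqv_app[OF alt_inv eqv_app[OF eqv_refl alt_inv]] .
  finally show ?thesis by simp
qed

section \<open>Model of the infinite dihedral group\<close>

definition fa :: "'a \<Rightarrow> int \<Rightarrow> int" where
  "fa c = (if c = a then (\<lambda>x. - x) else if c = b then (\<lambda>x. 2 - x) else id)"

fun phi :: "'a list \<Rightarrow> int \<Rightarrow> int" where
  "phi [] = id"
| "phi (c # v) = fa c \<circ> phi v"

lemma phi_append: "phi (v @ w) = phi v \<circ> phi w"
  by (induction v) auto

lemma fa_inv: "fa c \<circ> fa c = id"
  by (auto simp: fa_def fun_eq_iff)

lemma fa_comm: "E s t \<Longrightarrow> fa s \<circ> fa t = fa t \<circ> fa s"
proof -
  assume st: "E s t"
  have "s \<noteq> t" using st irrE by auto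
  moreover have "\<not> (s = a \<and> t = b)" using st nEab by auto
  moreover have "\<not> (s = b \<and> t = a)" using st nEab symE by auto
  ultimately show ?thesis by (auto simp: fa_def fun_eq_iff)
qed

lemma phi_rstep: "(v, w) \<in> rstep S E \<Longrightarrow> phi v = phi w"
proof (induction rule: rstep.induct)
  case (del s xs ys)
  have "phi (xs @ [s, s] @ ys) = phi xs \<circ> (fa s \<circ> fa s) \<circ> phi ys"
    by (simp add: phi_append comp_assoc)
  then show ?case by (simp add: fa_inv phi_append)
next
  case (swap s t xs ys)
  have "phi (xs @ [s, t] @ ys) = phi xs \<circ> (fa s \<circ> fa t) \<circ> phi ys"
    by (simp add: phi_append comp_assoc)
  also have "\<dots> = phi xs \<circ> (fa t \<circ> fa s) \<circ> phi ys" using fa_comm[OF swap] by simp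
  finally show ?case by (simp add: phi_append comp_assoc)
qed

lemma phi_eqv: "v \<approx> w \<Longrightarrow> phi v = phi w"
  unfolding eqv_def weq_def
proof (induction rule: rtrancl_induct)
  case base
  then show ?case by simp
next
  case (step y z)
  then show ?case using phi_rstep by auto
qed

lemma phi_pw: "phi (pw n) x = x - 2 * int n"
  by (induction n arbitrary: x) (auto simp: pw_Suc fa_def ab[symmetric])

lemma phi_alt: "phi (alt n) 0 = - 2 * int n"
  by (simp add: alt_def phi_append phi_pw fa_def)

lemma alt_distinct: "m \<noteq> n \<Longrightarrow> cls S E (alt m) \<noteq> cls S E (alt n)"
proof
  assume "m \<noteq> n" "cls S E (alt m) = cls S E (alt n)"
  hence "phi (alt m) = phi (alt n)" using phi_eqv by (simp add: cls_eq_iff)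
  hence "phi (alt m) 0 = phi (alt n) 0" by simp
  then show False using \<open>m \<noteq> n\<close> by (simp add: phi_alt)
qed

section \<open>Reflections of alternating words\<close>

definition altw :: "nat \<Rightarrow> 'a list" where
  "altw L = map (\<lambda>k. if even k then a else b) [0..<L]"

lemma altw_Suc: "altw (Suc L) = altw L @ [if even L then a else b]"
  by (simp add: altw_def)

lemma pw_altw: "pw n = altw (2 * n)"
proof (induction n)
  case 0
  then show ?case by (simp add: altw_def)
next
  case (Suc n)
  have "altw (2 * Suc n) = altw (Suc (Suc (2 * n)))" by simp
  also have "\<dots> = altw (2 * n) @ [a, b]" by (simp only: altw_Suc) simp
  finally show ?case using Suc by (simp add: pw_Suc')
qed

lemma alt_altw: "alt n = altw (2 * n + 1)"
  by (simp add: alt_def pw_altw altw_Suc)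

lemma altw_refl:
  assumes "i < L"
  shows "take i (altw L) @ [altw L ! i] @ rev (take i (altw L)) = altw (2 * i + 1)"
proof -
  let ?f = "\<lambda>k::nat. if even k then a else b"
  have t: "take i (altw L) = altw i" using assms by (simp add: altw_def take_map)
  have n: "altw L ! i = ?f i" using assms by (simp add: altw_def del: upt_Suc)
  have li: "length (altw i) = i" by (simp add: altw_def)
  have ai: "\<And>k. k < i \<Longrightarrow> altw i ! k = ?f k" by (simp add: altw_def del: upt_Suc)
  have aL: "\<And>k. k < 2 * i + 1 \<Longrightarrow> altw (2 * i + 1) ! k = ?f k" by (simp add: altw_def del: upt_Suc)
  show ?thesis unfolding t n
    apply (rule nth_equalityI)
     apply (simp add: li altw_def)
    subgoal for k
    proof -
      assume "k < length (altw i @ [?f i] @ rev (altw i))"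
      hence k': "k < 2 * i + 1" using li by simp
      consider (lt) "k < i" | (eq) "k = i" | (gt) "i < k" by linarith
      then show ?thesis
      proof cases
        case lt
        then show ?thesis using k' ai aL li by (simp add: nth_append)
      next
        case eq
        then show ?thesis using k' aL li by (simp add: nth_append)
      next
        case gt
        have "(altw i @ [?f i] @ rev (altw i)) ! k = rev (altw i) ! (k - i - 1)"
          using gt li by (simp add: nth_append)
        also have "\<dots> = altw i ! (i - 1 - (k - i - 1))" using gt k' li by (simp add: rev_nth)
        also have "\<dots> = ?f (i - 1 - (k - i - 1))" using gt k' by (intro ai) linarith
        also have "\<dots> = ?f k"
        proof -
          have "even (i - 1 - (k - i - 1)) \<longleftrightarrow> even k"
            using gt k' by presburger
          then show ?thesis by simp
        qed
        finally show ?thesis using aL[OF k'] by simp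
      qed
    qed
    done
qed

lemma refl_word_alt:
  assumes "i < 2 * m + 1"
  shows "take i (alt m) @ [alt m ! i] @ rev (take i (alt m)) = alt i"
  using altw_refl[OF assms] by (simp add: alt_altw)

lemma NN_alt: "NN (alt m) = {cls S E (alt i) | i. i < 2 * m + 1}"
proof -
  have len: "length (alt m) = 2 * m + 1" by (simp add: alt_altw altw_def)
  have r: "\<And>i. i < 2 * m + 1 \<Longrightarrow> refl_at [] (alt m) i = cls S E (alt i)"
    using refl_word_alt by (simp add: refl_at_def)
  have "rs [] (alt m) = {refl_at [] (alt m) i | i. i < length (alt m)}"
    by (rule rs_distinct) (use r alt_distinct len in auto)
  also have "\<dots> = (\<lambda>i. refl_at [] (alt m) i) ` {..<2 * m + 1}" using len by auto
  also have "\<dots> = (\<lambda>i. cls S E (alt i)) ` {..<2 * m + 1}" using r by (intro image_cong) auto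
  also have "\<dots> = {cls S E (alt i) | i. i < 2 * m + 1}" by auto
  finally show ?thesis .
qed

lemma alt_in_NN_alt: "cls S E (alt n) \<in> NN (alt (Suc n))"
  using NN_alt[of "Suc n"] by auto

lemma P_geo: "geo v \<Longrightarrow> cls S E (alt (Suc n)) \<in> NN v \<Longrightarrow> cls S E (alt n) \<in> NN v"
proof (induction "length v" arbitrary: v n rule: less_induct)
  case less
  have vl: "v \<in> lists S" using less.prems geo_lists by auto
  have Nv: "NN v = (\<lambda>i. refl_at [] v i) ` {..<length v}" using geo_rs[OF less.prems(1)] by auto
  then obtain i where i: "i < length v" "refl_at [] v i = cls S E (alt (Suc n))"
    using less.prems(2) by auto
  let ?y = "take i v" and ?c = "v ! i"
  have gy: "geo ?y" using geo_take less.prems(1) by blast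
  have yl: "?y \<in> lists S" using gy geo_lists by auto
  have cS: "?c \<in> S" using vl i(1) by (simp add: in_lists_conv_set)
  have Ny: "NN ?y = (\<lambda>j. refl_at [] v j) ` {..<i}"
  proof -
    have "NN ?y = (\<lambda>j. refl_at [] ?y j) ` {..<length ?y}" using geo_rs[OF gy] by auto
    also have "length ?y = i" using i(1) by simp
    also have "(\<lambda>j. refl_at [] ?y j) ` {..<i} = (\<lambda>j. refl_at [] v j) ` {..<i}"
      using i(1) by (intro image_cong) (auto simp: refl_at_def min_def)
    finally show ?thesis .
  qed
  have sub: "NN ?y \<subseteq> NN v" unfolding Ny Nv using i(1) by (intro image_mono) auto
  have notin: "cls S E (alt (Suc n)) \<notin> NN ?y"
  proof
    assume "cls S E (alt (Suc n)) \<in> NN ?y"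
    then obtain j where "j < i" "refl_at [] v j = cls S E (alt (Suc n))" using Ny by auto
    then show False using geo_distinct[OF less.prems(1), of "[]" j i] i by simp
  qed
  show ?case
  proof (rule ccontr)
    assume nv: "cls S E (alt n) \<notin> NN v"
    hence ny: "cls S E (alt n) \<notin> NN ?y" using sub by auto
    have refl: "cls S E (?y @ [?c] @ rev ?y) = cls S E (alt (Suc n))"
      using i(2) by (simp add: refl_at_def)
    have N1: "NN (?y @ [?c]) = sd (NN ?y) {cls S E (alt (Suc n))}"
      using NN_append[of ?y "[?c]"] refl by simp
    have yc: "?y @ [?c] \<approx> alt (Suc n) @ ?y"
    proof -
      have "?y @ [?c] \<approx> (?y @ [?c] @ rev ?y) @ ?y"
        using eqv_app[OF eqv_refl[of "?y @ [?c]"] eqv_sym[OF eqv_inv'[OF yl]]] by simp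
      also have "\<dots> \<approx> alt (Suc n) @ ?y"
      proof -
        have "?y @ [?c] @ rev ?y \<approx> alt (Suc n)" using refl by (simp only: cls_eq_iff)
        then show ?thesis by (rule eqv_app) simp
      qed
      finally show ?thesis .
    qed
    have "NN (?y @ [?c]) = NN (alt (Suc n) @ ?y)" using rs_eqv[OF yc] .
    also have "\<dots> = sd (NN (alt (Suc n))) (rs (alt (Suc n)) ?y)" by (rule NN_append)
    finally have N2: "NN (?y @ [?c]) = sd (NN (alt (Suc n))) (rs (alt (Suc n)) ?y)" .
    have d: "cls S E (alt n) \<noteq> cls S E (alt (Suc n))" using alt_distinct[of n "Suc n"] by simp
    have "cls S E (alt n) \<notin> NN (?y @ [?c])" unfolding N1 using ny d by simp
    hence m1: "cls S E (alt n) \<in> rs (alt (Suc n)) ?y" unfolding N2 using alt_in_NN_alt[of n] by simp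
    have "alt (Suc n) @ alt (Suc (Suc n)) @ rev (alt (Suc n)) \<approx> alt n"
      using alt_conj'[of n] unfolding rev_alt .
    hence m2: "cls S E (alt (Suc n) @ alt (Suc (Suc n)) @ rev (alt (Suc n))) = cls S E (alt n)"
      by (simp only: cls_eq_iff)
    have "cls S E (alt (Suc n) @ alt (Suc (Suc n)) @ rev (alt (Suc n))) \<in> rs (alt (Suc n) @ []) ?y"
      using m1 m2 by simp
    hence "cls S E (alt (Suc (Suc n))) \<in> rs [] ?y"
      using rs_conj[OF alt_lists[of "Suc n"], of "alt (Suc (Suc n))" "[]" ?y] by blast
    hence "cls S E (alt (Suc n)) \<in> NN ?y"
      using less.hyps[of ?y "Suc n"] i(1) gy by simp
    then show False using notin by simp
  qed
qed

lemma P_all: "x \<in> lists S \<Longrightarrow> cls S E (alt (Suc n)) \<in> NN x \<Longrightarrow> cls S E (alt n) \<in> NN x"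
proof -
  assume x: "x \<in> lists S" and h: "cls S E (alt (Suc n)) \<in> NN x"
  obtain g where g: "geo g" "g \<approx> x" using geo_exists[OF x] by blast
  have "NN g = NN x" using rs_eqv[OF g(2)] by simp
  then show ?thesis using P_geo[OF g(1)] h by simp
qed

lemma H:
  assumes h: "h \<in> lists S" and c: "c \<in> S" and r: "cls S E (h @ [c] @ rev h) = cls S E (alt 1)"
  shows "cls S E (alt 0) \<in> NN h \<and> cls S E (alt 0) \<in> NN (h @ [c])"
proof -
  have N1: "NN (h @ [c]) = sd (NN h) {cls S E (alt 1)}"
    using NN_append[of h "[c]"] r by simp
  have d: "cls S E (alt 0) \<noteq> cls S E (alt 1)" using alt_distinct by simp
  have hc: "h @ [c] \<in> lists S" using h c by simp
  show ?thesis
  proof (cases "cls S E (alt 1) \<in> NN h")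
    case True
    hence "cls S E (alt 0) \<in> NN h" using P_all[OF h, of 0] by simp
    then show ?thesis using N1 d by simp
  next
    case False
    hence "cls S E (alt 1) \<in> NN (h @ [c])" using N1 by simp
    hence "cls S E (alt 0) \<in> NN (h @ [c])" using P_all[OF hc, of 0] by simp
    then show ?thesis using N1 d by simp
  qed
qed

end



context racsl
begin

lemma rs_Nil[simp]: "rs u [] = {}" by simp

lemma cls_self[simp]: "x \<in> cls S E x"
  unfolding cls_def using eqv_refl[of x, unfolded eqv_def] by simp

lemma lists_take: "v \<in> lists S \<Longrightarrow> take i v \<in> lists S"
  by (auto simp: in_lists_conv_set dest: in_set_takeD)

lemma lists_drop: "v \<in> lists S \<Longrightarrow> drop i v \<in> lists S"
  by (auto simp: in_lists_conv_set dest: in_set_dropD)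

lemma lists_nth: "v \<in> lists S \<Longrightarrow> i < length v \<Longrightarrow> v ! i \<in> S"
  by (auto simp: in_lists_conv_set)

lemma lists_rev: "v \<in> lists S \<Longrightarrow> rev v \<in> lists S"
  by (auto simp: in_lists_conv_set)

lemma refl_at_refl: "u \<in> lists S \<Longrightarrow> v \<in> lists S \<Longrightarrow> k < length v \<Longrightarrow> refl_at u v k \<in> reflections S E"
  unfolding reflections_def refl_at_def
  by (rule CollectI, rule exI[of _ "u @ take k v"], rule exI[of _ "v ! k"])
     (simp add: lists_take lists_nth)

lemma refl_at_cong: "u \<approx> u' \<Longrightarrow> refl_at u v k = refl_at u' v k"
proof -
  assume h: "u \<approx> u'"
  have "(u @ take k v) @ [v ! k] @ rev (u @ take k v) \<approx> (u' @ take k v) @ [v ! k] @ rev (u' @ take k v)"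
    using h by (intro eqv_app eqv_rev) auto
  then show ?thesis unfolding refl_at_def by (simp add: cls_eq_iff)
qed

lemma refl_at_append1: "i < length p \<Longrightarrow> refl_at u (p @ q) i = refl_at u p i"
  by (simp add: refl_at_def nth_append)

lemma refl_at_append2: "refl_at u (p @ q) (length p + i) = refl_at (u @ p) q i"
  by (simp add: refl_at_def nth_append)

lemma geo_NN_take: "geo g \<Longrightarrow> j \<le> length g \<Longrightarrow> NN (take j g) = (\<lambda>i. refl_at [] g i) ` {..<j}"
proof -
  assume g: "geo g" and j: "j \<le> length g"
  have "NN (take j g) = {refl_at [] (take j g) i | i. i < length (take j g)}"
    using geo_rs[OF geo_take[OF g]] by simp
  also have "\<dots> = (\<lambda>i. refl_at [] (take j g) i) ` {..<j}" using j by auto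
  also have "\<dots> = (\<lambda>i. refl_at [] g i) ` {..<j}"
    by (intro image_cong) (auto simp: refl_at_def min_def)
  finally show ?thesis .
qed

lemma geo_NN: "geo g \<Longrightarrow> NN g = (\<lambda>i. refl_at [] g i) ` {..<length g}"
  using geo_NN_take[of g "length g"] by simp

lemma NN_Nil[simp]: "NN [] = {}" by simp

text \<open>The key geometric lemma: adjacent non-commuting letters give nested walls.\<close>

lemma adj_prec:
  assumes g: "geo v" and j: "Suc j < length v" and nE: "\<not> E (v ! j) (v ! Suc j)"
    and y: "y \<in> lists S" and s: "s \<in> S"
    and r: "cls S E (y @ [s] @ rev y) = refl_at [] v (Suc j)"
  shows "refl_at [] v j \<in> NN y \<and> refl_at [] v j \<in> NN (y @ [s])"
proof -
  let ?g = "take j v" and ?a = "v ! j" and ?b = "v ! Suc j"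
  have vl: "v \<in> lists S" using g geo_lists by auto
  have gl: "?g \<in> lists S" using vl lists_take by auto
  have aS: "?a \<in> S" and bS: "?b \<in> S" using vl j lists_nth by auto
  have tS: "take (Suc j) v = ?g @ [?a]" using j by (simp add: take_Suc_conv_app_nth)
  have r1: "refl_at [] v (Suc j) = cls S E (?g @ [?a, ?b, ?a] @ rev ?g)"
    unfolding refl_at_def tS by simp
  have r0: "refl_at [] v j = cls S E (?g @ [?a] @ rev ?g)"
    unfolding refl_at_def by simp
  have ab: "?a \<noteq> ?b"
  proof
    assume eq: "?a = ?b"
    have "?g @ [?a, ?b, ?a] @ rev ?g = ?g @ ([?a, ?a] @ [?a]) @ rev ?g" using eq by simp
    also have "\<dots> \<approx> ?g @ ([] @ [?a]) @ rev ?g"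
      using eqv_app[OF eqv_ss[OF aS] eqv_refl] by (rule eqv_ctx)
    finally have "refl_at [] v (Suc j) = refl_at [] v j" unfolding r1 r0 by (simp add: cls_eq_iff)
    then show False using geo_distinct[OF g, of "[]" j "Suc j"] j by simp
  qed
  interpret d: dinf S E ?a ?b
    using racsl_axioms aS bS ab nE by (simp add: dinf_def dinf_axioms_def)
  have alt1: "d.alt 1 = [?a, ?b, ?a]" by (simp add: d.alt_def d.pw_def)
  have alt0: "d.alt 0 = [?a]" by (simp add: d.alt_def d.pw_def)
  let ?h = "rev ?g @ y"
  have hl: "?h \<in> lists S" using gl y lists_rev by simp
  have "?g @ [?a, ?b, ?a] @ rev ?g \<approx> y @ [s] @ rev y"
  proof -
    have "y @ [s] @ rev y \<approx> ?g @ [?a, ?b, ?a] @ rev ?g" using r r1 by (simp add: cls_eq_iff)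
    then show ?thesis by (rule eqv_sym)
  qed
  hence A: "rev ?g @ (?g @ [?a, ?b, ?a] @ rev ?g) @ ?g \<approx> rev ?g @ (y @ [s] @ rev y) @ ?g"
    by (rule eqv_ctx)
  have B: "rev ?g @ (?g @ [?a, ?b, ?a] @ rev ?g) @ ?g \<approx> [?a, ?b, ?a]"
  proof -
    have "rev ?g @ (?g @ [?a, ?b, ?a] @ rev ?g) @ ?g = (rev ?g @ ?g) @ [?a, ?b, ?a] @ (rev ?g @ ?g)"
      by simp
    also have "\<dots> \<approx> [] @ [?a, ?b, ?a] @ []"
      using eqv_app[OF eqv_inv'[OF gl] eqv_app[OF eqv_refl eqv_inv'[OF gl]]] .
    finally show ?thesis by simp
  qed
  have "rev ?g @ (y @ [s] @ rev y) @ ?g \<approx> [?a, ?b, ?a]"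
    using eqv_trans[OF eqv_sym[OF A] B] .
  hence "?h @ [s] @ rev ?h \<approx> [?a, ?b, ?a]" by simp
  hence "cls S E (?h @ [s] @ rev ?h) = cls S E (d.alt 1)" unfolding alt1 by (simp add: cls_eq_iff)
  hence H: "cls S E [?a] \<in> NN ?h \<and> cls S E [?a] \<in> NN (?h @ [s])"
    using d.H[OF hl s] unfolding alt0 by simp
  have Ng: "refl_at [] v j \<notin> NN ?g"
  proof
    assume "refl_at [] v j \<in> NN ?g"
    then obtain i where "i < j" "refl_at [] v j = refl_at [] v i"
      using geo_NN_take[OF g, of j] j by auto
    then show False using geo_distinct[OF g, of "[]" i j] j by simp
  qed
  have yeq: "\<And>z. ?g @ (rev ?g @ z) \<approx> z"
  proof -
    fix z
    have "?g @ (rev ?g @ z) = (?g @ rev ?g) @ z" by simp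
    also have "\<dots> \<approx> [] @ z" using eqv_app[OF eqv_inv[OF gl] eqv_refl] .
    finally show "?g @ (rev ?g @ z) \<approx> z" by simp
  qed
  have key: "\<And>z. refl_at [] v j \<in> NN (?g @ z) \<longleftrightarrow> cls S E [?a] \<in> NN z"
  proof -
    fix z
    have "NN (?g @ z) = sd (NN ?g) (rs ?g z)" by (rule NN_append)
    moreover have "(cls S E (?g @ [?a] @ rev ?g) \<in> rs (?g @ []) z) = (cls S E [?a] \<in> rs [] z)"
      by (rule rs_conj[OF gl])
    ultimately show "refl_at [] v j \<in> NN (?g @ z) \<longleftrightarrow> cls S E [?a] \<in> NN z"
      using Ng r0 by simp
  qed
  have "NN y = NN (?g @ ?h)" using rs_eqv[OF eqv_sym[OF yeq[of y]]] .
  moreover have "NN (y @ [s]) = NN (?g @ (?h @ [s]))" using rs_eqv[OF eqv_sym[OF yeq[of "y @ [s]"]]] by simp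
  ultimately show ?thesis using key H by simp
qed

lemma refl_self:
  assumes v: "v \<in> lists S" and s: "s \<in> S"
  shows "cls S E (v @ [s] @ rev v) \<in> NN (v @ [s] @ rev v)"
proof -
  let ?\<rho> = "v @ [s] @ rev v"
  have \<rho>l: "?\<rho> \<in> lists S" using v s lists_rev by simp
  have rev\<rho>: "rev ?\<rho> = ?\<rho>" by simp
  have inv: "NN (v @ rev v) = {}" using rs_eqv[OF eqv_inv[OF v], of "[]"] by simp
  hence rv: "rs v (rev v) = NN v" using NN_append[of v "rev v"] by (auto simp: sd_def)
  have vs: "v @ [s] \<approx> ?\<rho> @ v"
  proof -
    have "v @ [s] \<approx> (v @ [s]) @ (rev v @ v)" using eqv_app[OF eqv_refl[of "v @ [s]"] eqv_sym[OF eqv_inv'[OF v]]] by simp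
    then show ?thesis by simp
  qed
  have "NN ?\<rho> = sd (NN v) (rs v ([s] @ rev v))" by (rule NN_append)
  also have "rs v ([s] @ rev v) = sd {cls S E ?\<rho>} (rs (v @ [s]) (rev v))" by simp
  also have "rs (v @ [s]) (rev v) = rs (?\<rho> @ v) (rev v)" using rs_cong_prefix[OF vs] .
  finally have N: "NN ?\<rho> = sd (NN v) (sd {cls S E ?\<rho>} (rs (?\<rho> @ v) (rev v)))" .
  have "?\<rho> @ ?\<rho> @ rev ?\<rho> \<approx> ?\<rho>"
  proof -
    have "?\<rho> @ (?\<rho> @ rev ?\<rho>) \<approx> ?\<rho> @ []" using eqv_app[OF eqv_refl eqv_inv[OF \<rho>l]] .
    then show ?thesis by simp
  qed
  hence c: "cls S E (?\<rho> @ ?\<rho> @ rev ?\<rho>) = cls S E ?\<rho>" by (simp add: cls_eq_iff)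
  have "(cls S E (?\<rho> @ ?\<rho> @ rev ?\<rho>) \<in> rs (?\<rho> @ v) (rev v)) = (cls S E ?\<rho> \<in> rs v (rev v))"
    by (rule rs_conj[OF \<rho>l])
  hence "(cls S E ?\<rho> \<in> rs (?\<rho> @ v) (rev v)) = (cls S E ?\<rho> \<in> NN v)" using c rv by simp
  then show ?thesis using N by simp
qed

lemma commute_el_iff:
  assumes "\<rho> \<in> lists S" "\<rho>' \<in> lists S"
  shows "commute_el S E (cls S E \<rho>) (cls S E \<rho>') \<longleftrightarrow> \<rho> @ \<rho>' \<approx> \<rho>' @ \<rho>"
proof
  assume "commute_el S E (cls S E \<rho>) (cls S E \<rho>')"
  then obtain \<alpha> \<beta> where ab: "\<alpha> \<in> cls S E \<rho>" "\<beta> \<in> cls S E \<rho>'"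
      "cls S E (\<alpha> @ \<beta>) = cls S E (\<beta> @ \<alpha>)"
    unfolding commute_el_def by blast
  have ra: "\<rho> \<approx> \<alpha>" and rb: "\<rho>' \<approx> \<beta>" using ab(1,2) unfolding cls_def eqv_def by auto
  have "\<rho> @ \<rho>' \<approx> \<alpha> @ \<beta>" using eqv_app[OF ra rb] .
  also have "\<dots> \<approx> \<beta> @ \<alpha>" using ab(3) by (simp only: cls_eq_iff)
  also have "\<dots> \<approx> \<rho>' @ \<rho>" using eqv_app[OF eqv_sym[OF rb] eqv_sym[OF ra]] .
  finally show "\<rho> @ \<rho>' \<approx> \<rho>' @ \<rho>" .
next
  assume h: "\<rho> @ \<rho>' \<approx> \<rho>' @ \<rho>"
  show "commute_el S E (cls S E \<rho>) (cls S E \<rho>')"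
    unfolding commute_el_def using assms cls_eq_iff[THEN iffD2, OF h] cls_self[of \<rho>] cls_self[of \<rho>'] by blast
qed

lemma walls_intersect_iff:
  assumes "r \<in> reflections S E" "r' \<in> reflections S E"
  shows "walls_intersect S E (wall S E r) (wall S E r') \<longleftrightarrow> r = r' \<or> commute_el S E r r'"
proof
  assume "walls_intersect S E (wall S E r) (wall S E r')"
  then obtain r0 r0' where h: "r0 \<in> reflections S E" "r0' \<in> reflections S E"
    "wall S E r = wall S E r0" "wall S E r' = wall S E r0'" "r0 = r0' \<or> commute_el S E r0 r0'"
    unfolding walls_intersect_def by blast
  have "r = r0" "r' = r0'" using wall_inj assms h by auto
  then show "r = r' \<or> commute_el S E r r'" using h by simp
next
  assume "r = r' \<or> commute_el S E r r'"
  then show "walls_intersect S E (wall S E r) (wall S E r')"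
    unfolding walls_intersect_def using assms by blast
qed

lemma nested_not_intersect:
  assumes v: "v \<in> lists S" "s \<in> S" and v': "v' \<in> lists S" "s' \<in> S"
    and wl: "wall_less S E (cls S E []) (wall S E (cls S E (v @ [s] @ rev v))) (wall S E (cls S E (v' @ [s'] @ rev v')))"
  shows "\<not> walls_intersect S E (wall S E (cls S E (v @ [s] @ rev v))) (wall S E (cls S E (v' @ [s'] @ rev v')))"
proof -
  let ?\<rho> = "v @ [s] @ rev v" and ?\<rho>' = "v' @ [s'] @ rev v'"
  let ?r = "cls S E ?\<rho>" and ?r' = "cls S E ?\<rho>'"
  have rr: "?r \<in> reflections S E" using v unfolding reflections_def by blast
  have rr': "?r' \<in> reflections S E" using v' unfolding reflections_def by blast
  have \<rho>l: "?\<rho> \<in> lists S" using v lists_rev by simp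
  have \<rho>l': "?\<rho>' \<in> lists S" using v' lists_rev by simp
  have W: "\<And>y t. y \<in> lists S \<Longrightarrow> t \<in> S \<Longrightarrow> cls S E (y @ [t] @ rev y) = ?r' \<Longrightarrow> ?r \<in> NN y \<and> ?r \<in> NN (y @ [t])"
    using wl wall_less_iff[OF rr, of "[]" ?r'] by simp
  have in1: "?r \<in> NN v'" and in2: "?r \<in> NN (v' @ [s'])" using W[OF v' refl] by auto
  have neq: "?r \<noteq> ?r'"
  proof
    assume eq: "?r = ?r'"
    have "NN (v' @ [s']) = sd (NN v') {?r'}" using NN_append[of v' "[s']"] by simp
    then show False using in1 in2 eq by simp
  qed
  have ncomm: "\<not> ?\<rho> @ ?\<rho>' \<approx> ?\<rho>' @ ?\<rho>"
  proof
    assume c: "?\<rho> @ ?\<rho>' \<approx> ?\<rho>' @ ?\<rho>"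
    let ?z = "?\<rho> @ v'"
    have zl: "?z \<in> lists S" using \<rho>l v' by simp
    have revr: "rev ?\<rho> = ?\<rho>" by simp
    have rr2: "?\<rho> @ ?\<rho> \<approx> []" using eqv_inv[OF \<rho>l] by simp
    have "?z @ [s'] @ rev ?z = ?\<rho> @ ?\<rho>' @ ?\<rho>" by simp
    also have "\<dots> = (?\<rho> @ ?\<rho>') @ ?\<rho>" by simp
    also have "\<dots> \<approx> (?\<rho>' @ ?\<rho>) @ ?\<rho>" using eqv_app[OF c eqv_refl] .
    also have "\<dots> = ?\<rho>' @ (?\<rho> @ ?\<rho>)" by simp
    also have "\<dots> \<approx> ?\<rho>' @ []" using eqv_app[OF eqv_refl[of ?\<rho>'] rr2] .
    finally have "cls S E (?z @ [s'] @ rev ?z) = ?r'" by (simp add: cls_eq_iff)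
    hence rz: "?r \<in> NN ?z" using W[OF zl v'(2)] by simp
    have N: "NN ?z = sd (NN ?\<rho>) (rs ?\<rho> v')" by (rule NN_append)
    have self: "?r \<in> NN ?\<rho>" using refl_self[OF v] .
    have "?\<rho> @ ?\<rho> @ rev ?\<rho> \<approx> ?\<rho>"
    proof -
      have "?\<rho> @ (?\<rho> @ rev ?\<rho>) \<approx> ?\<rho> @ []" using eqv_app[OF eqv_refl eqv_inv[OF \<rho>l]] .
      then show ?thesis by simp
    qed
    hence cc: "cls S E (?\<rho> @ ?\<rho> @ rev ?\<rho>) = ?r" by (simp add: cls_eq_iff)
    have "(cls S E (?\<rho> @ ?\<rho> @ rev ?\<rho>) \<in> rs (?\<rho> @ []) v') = (cls S E ?\<rho> \<in> rs [] v')"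
      by (rule rs_conj[OF \<rho>l])
    hence "?r \<in> rs ?\<rho> v'" using cc in1 by simp
    then show False using rz N self by simp
  qed
  have "\<not> commute_el S E ?r ?r'" using commute_el_iff[OF \<rho>l \<rho>l'] ncomm by simp
  then show ?thesis using walls_intersect_iff[OF rr rr'] neq by simp
qed

lemma adj_commute:
  assumes v: "v \<in> lists S" and j: "Suc j < length v" and e: "E (v ! j) (v ! Suc j)"
  shows "commute_el S E (refl_at [] v j) (refl_at [] v (Suc j))"
proof -
  let ?g = "take j v" and ?a = "v ! j" and ?b = "v ! Suc j"
  have gl: "?g \<in> lists S" using v lists_take by auto
  have aS: "?a \<in> S" and bS: "?b \<in> S" using v j lists_nth by auto
  have tS: "take (Suc j) v = ?g @ [?a]" using j by (simp add: take_Suc_conv_app_nth)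
  have r0: "refl_at [] v j = cls S E (?g @ [?a] @ rev ?g)" unfolding refl_at_def by simp
  have "refl_at [] v (Suc j) = cls S E (?g @ [?a, ?b, ?a] @ rev ?g)"
    unfolding refl_at_def tS by simp
  also have "?g @ [?a, ?b, ?a] @ rev ?g \<approx> ?g @ [?b] @ rev ?g"
  proof (rule eqv_ctx)
    have "[?a, ?b, ?a] = [?a, ?b] @ [?a]" by simp
    also have "\<dots> \<approx> [?b, ?a] @ [?a]" using eqv_app[OF eqv_swap[OF e] eqv_refl] .
    also have "\<dots> = [?b] @ [?a, ?a]" by simp
    also have "\<dots> \<approx> [?b] @ []" using eqv_app[OF eqv_refl eqv_ss[OF aS]] .
    finally show "[?a, ?b, ?a] \<approx> [?b]" by simp
  qed
  hence "cls S E (?g @ [?a, ?b, ?a] @ rev ?g) = cls S E (?g @ [?b] @ rev ?g)" by (simp add: cls_eq_iff)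
  finally have r1: "refl_at [] v (Suc j) = cls S E (?g @ [?b] @ rev ?g)" .
  have l1: "?g @ [?a] @ rev ?g \<in> lists S" and l2: "?g @ [?b] @ rev ?g \<in> lists S"
    using gl aS bS lists_rev by auto
  have "(?g @ [?a] @ rev ?g) @ (?g @ [?b] @ rev ?g) \<approx> (?g @ [?b] @ rev ?g) @ (?g @ [?a] @ rev ?g)"
  proof -
    have "(?g @ [?a] @ rev ?g) @ (?g @ [?b] @ rev ?g) = (?g @ [?a]) @ (rev ?g @ ?g) @ ([?b] @ rev ?g)" by simp
    also have "\<dots> \<approx> (?g @ [?a]) @ [] @ ([?b] @ rev ?g)" using eqv_inv'[OF gl] by (rule eqv_ctx)
    also have "\<dots> = ?g @ [?a, ?b] @ rev ?g" by simp
    also have "\<dots> \<approx> ?g @ [?b, ?a] @ rev ?g" using eqv_swap[OF e] by (rule eqv_ctx)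
    also have "\<dots> = (?g @ [?b]) @ [] @ ([?a] @ rev ?g)" by simp
    also have "\<dots> \<approx> (?g @ [?b]) @ (rev ?g @ ?g) @ ([?a] @ rev ?g)" using eqv_sym[OF eqv_inv'[OF gl]] by (rule eqv_ctx)
    also have "\<dots> = (?g @ [?b] @ rev ?g) @ (?g @ [?a] @ rev ?g)" by simp
    finally show ?thesis .
  qed
  then show ?thesis unfolding r0 r1 using commute_el_iff[OF l1 l2] by simp
qed

end



locale geow = racsl S E for S :: "'a set" and E +
  fixes w :: "'a list"
  assumes gw: "geo w"
begin

definition T :: "nat \<Rightarrow> 'a list set" where "T k = refl_at [] w k"

definition prec :: "nat \<Rightarrow> nat \<Rightarrow> bool" where
  "prec k l \<longleftrightarrow> wall_less S E (cls S E []) (wall S E (T k)) (wall S E (T l))"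

lemma wl: "w \<in> lists S" using gw geo_lists by auto

lemma T_refl: "k < length w \<Longrightarrow> T k \<in> reflections S E"
  unfolding T_def using refl_at_refl[of "[]" w k] wl by simp

lemma T_inj: "k < length w \<Longrightarrow> l < length w \<Longrightarrow> T k = T l \<Longrightarrow> k = l"
  unfolding T_def using geo_distinct[OF gw, of "[]"] by (metis linorder_neqE_nat lists.Nil)

lemma NN_take_w: "p \<le> length w \<Longrightarrow> NN (take p w) = T ` {..<p}"
  unfolding T_def using geo_NN_take[OF gw] by simp

lemma NN_w: "NN w = T ` {..<length w}"
  using NN_take_w[of "length w"] by simp

lemma prec_iff:
  assumes "k < length w"
  shows "prec k l \<longleftrightarrow> (\<forall>y s. y \<in> lists S \<longrightarrow> s \<in> S \<longrightarrow> cls S E (y @ [s] @ rev y) = T l \<longrightarrow>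
      T k \<in> NN y \<and> T k \<in> NN (y @ [s]))"
  unfolding prec_def using wall_less_iff[OF T_refl[OF assms], of "[]" "T l"] by simp

lemma T_vertex: "cls S E (take l w @ [w ! l] @ rev (take l w)) = T l"
  by (simp add: T_def refl_at_def)

lemma take_lists: "take l w \<in> lists S" using wl lists_take by auto
lemma nth_S: "l < length w \<Longrightarrow> w ! l \<in> S" using wl lists_nth by auto

lemma prec_less:
  assumes k: "k < length w" and l: "l < length w" and p: "prec k l"
  shows "k < l"
proof -
  have "T k \<in> NN (take l w)"
    using p prec_iff[OF k] take_lists nth_S[OF l] T_vertex by blast
  then obtain i where i: "i < l" "T k = T i" using NN_take_w[of l] l by auto
  have "k = i" using T_inj[OF k _ i(2)] i(1) l by simp
  then show ?thesis using i(1) by simp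
qed

lemma prec_irrefl: "k < length w \<Longrightarrow> \<not> prec k k"
  using prec_less by blast

lemma prec_NN:
  assumes k: "k < length w" and l: "l < length w" and p: "prec k l"
    and x: "x \<in> lists S" and tl: "T l \<in> NN x"
  shows "T k \<in> NN x"
proof -
  obtain g where g: "geo g" "g \<approx> x" using geo_exists[OF x] by blast
  have Ng: "NN g = NN x" using rs_eqv[OF g(2)] by simp
  have gl: "g \<in> lists S" using g geo_lists by auto
  have "T l \<in> refl_at [] g ` {..<length g}" using tl Ng geo_NN[OF g(1)] by simp
  then obtain j where j: "j < length g" "T l = refl_at [] g j" by auto
  have "cls S E (take j g @ [g ! j] @ rev (take j g)) = T l" using j(2) by (simp add: refl_at_def)
  hence "T k \<in> NN (take j g)"
    using p prec_iff[OF k] gl lists_take lists_nth j(1) by blast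
  also have "NN (take j g) \<subseteq> NN g" using geo_NN_take[OF g(1)] geo_NN[OF g(1)] j(1) by auto
  finally show ?thesis using Ng by simp
qed

lemma prec_trans:
  assumes k: "k < length w" and l: "l < length w" and q: "q < length w"
    and p1: "prec k l" and p2: "prec l q"
  shows "prec k q"
  unfolding prec_iff[OF k]
proof (intro allI impI)
  fix y s assume y: "y \<in> lists S" and s: "s \<in> S" and r: "cls S E (y @ [s] @ rev y) = T q"
  have "T l \<in> NN y \<and> T l \<in> NN (y @ [s])" using p2 prec_iff[OF l] y s r by blast
  moreover have "y @ [s] \<in> lists S" using y s by simp
  ultimately show "T k \<in> NN y \<and> T k \<in> NN (y @ [s])" using prec_NN[OF k l p1] y by blast
qed

section \<open>Realizations\<close>

definition wd :: "nat list \<Rightarrow> 'a list" where "wd \<tau> = map (\<lambda>i. w ! i) \<tau>"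

definition realiz :: "nat list \<Rightarrow> bool" where
  "realiz \<tau> \<longleftrightarrow> distinct \<tau> \<and> set \<tau> = {..<length w} \<and> wd \<tau> \<approx> w \<and>
     (\<forall>j<length w. refl_at [] (wd \<tau>) j = T (\<tau> ! j))"

lemma realiz_length: "realiz \<tau> \<Longrightarrow> length \<tau> = length w"
  unfolding realiz_def using distinct_card by fastforce

lemma realiz_id: "realiz [0..<length w]"
proof -
  have "wd [0..<length w] = w" unfolding wd_def by (simp add: map_nth)
  then show ?thesis unfolding realiz_def T_def by auto
qed

lemma wd_lists: "set \<tau> \<subseteq> {..<length w} \<Longrightarrow> wd \<tau> \<in> lists S"
  unfolding wd_def by (auto simp: in_lists_conv_set subset_iff intro!: nth_S)

lemma realiz_geo: "realiz \<tau> \<Longrightarrow> geo (wd \<tau>)"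
proof -
  assume r: "realiz \<tau>"
  have len: "length (wd \<tau>) = length w" using realiz_length[OF r] by (simp add: wd_def)
  have eq: "wd \<tau> \<approx> w" using r by (simp add: realiz_def)
  show "geo (wd \<tau>)" unfolding geo_def
  proof (intro conjI ballI impI)
    show "wd \<tau> \<in> lists S" using r wd_lists by (simp add: realiz_def)
  next
    fix v' assume "v' \<in> lists S" "v' \<approx> wd \<tau>"
    hence "v' \<approx> w" using eq eqv_trans by blast
    hence "length w \<le> length v'" using gw \<open>v' \<in> lists S\<close> by (simp add: geo_def)
    then show "length (wd \<tau>) \<le> length v'" using len by simp
  qed
qed

lemma realiz_prec_adj:
  assumes r: "realiz \<tau>" and j: "Suc j < length w" and nE: "\<not> E (w ! (\<tau> ! j)) (w ! (\<tau> ! Suc j))"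
  shows "prec (\<tau> ! j) (\<tau> ! Suc j)"
proof -
  have len: "length \<tau> = length w" using realiz_length[OF r] .
  have g: "geo (wd \<tau>)" using realiz_geo[OF r] .
  have lw: "length (wd \<tau>) = length w" using len by (simp add: wd_def)
  have tj: "\<tau> ! j < length w" using r j len by (metis Suc_lessD lessThan_iff nth_mem realiz_def)
  have R0: "refl_at [] (wd \<tau>) j = T (\<tau> ! j)" using r j by (simp add: realiz_def)
  have R1: "refl_at [] (wd \<tau>) (Suc j) = T (\<tau> ! Suc j)" using r j by (simp add: realiz_def)
  have nE': "\<not> E (wd \<tau> ! j) (wd \<tau> ! Suc j)" using nE j len by (simp add: wd_def)
  show ?thesis unfolding prec_iff[OF tj]
  proof (intro allI impI)
    fix y s assume y: "y \<in> lists S" and s: "s \<in> S" and c: "cls S E (y @ [s] @ rev y) = T (\<tau> ! Suc j)"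
    show "T (\<tau> ! j) \<in> NN y \<and> T (\<tau> ! j) \<in> NN (y @ [s])"
      using adj_prec[OF g _ nE' y s] j lw c R0 R1 by simp
  qed
qed

lemma wd_append: "wd (A @ B) = wd A @ wd B" by (simp add: wd_def)

lemma realiz_swap:
  assumes r: "realiz (A @ [x, y] @ B)" and e: "E (w ! x) (w ! y)"
  shows "realiz (A @ [y, x] @ B)"
proof -
  let ?\<tau> = "A @ [x, y] @ B" and ?\<tau>' = "A @ [y, x] @ B"
  have len: "length ?\<tau> = length w" using realiz_length[OF r] .
  have xS: "w ! x \<in> S" and yS: "w ! y \<in> S" using e ES ES2 by auto
  have wdt: "wd ?\<tau> = wd A @ [w ! x, w ! y] @ wd B" by (simp add: wd_def)
  have wdt': "wd ?\<tau>' = wd A @ [w ! y, w ! x] @ wd B" by (simp add: wd_def)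
  have sw: "wd ?\<tau>' \<approx> wd ?\<tau>" unfolding wdt wdt' using eqv_swap[OF symE[OF e]] by (rule eqv_ctx)
  have d: "distinct ?\<tau>'" "set ?\<tau>' = {..<length w}" using r by (auto simp: realiz_def)
  have eq: "wd ?\<tau>' \<approx> w" using eqv_trans[OF sw] r by (simp add: realiz_def)
  have xyx: "wd A @ [w ! x, w ! y, w ! x] @ rev (wd A) \<approx> wd A @ [w ! y] @ rev (wd A)"
  proof (rule eqv_ctx)
    have "[w ! x, w ! y, w ! x] = [w ! x, w ! y] @ [w ! x]" by simp
    also have "\<dots> \<approx> [w ! y, w ! x] @ [w ! x]" using eqv_app[OF eqv_swap[OF e] eqv_refl] .
    also have "\<dots> = [w ! y] @ [w ! x, w ! x]" by simp
    also have "\<dots> \<approx> [w ! y] @ []" using eqv_app[OF eqv_refl eqv_ss[OF xS]] .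
    finally show "[w ! x, w ! y, w ! x] \<approx> [w ! y]" by simp
  qed
  have yxy: "wd A @ [w ! y, w ! x, w ! y] @ rev (wd A) \<approx> wd A @ [w ! x] @ rev (wd A)"
  proof (rule eqv_ctx)
    have "[w ! y, w ! x, w ! y] = [w ! y, w ! x] @ [w ! y]" by simp
    also have "\<dots> \<approx> [w ! x, w ! y] @ [w ! y]" using eqv_app[OF eqv_swap[OF symE[OF e]] eqv_refl] .
    also have "\<dots> = [w ! x] @ [w ! y, w ! y]" by simp
    also have "\<dots> \<approx> [w ! x] @ []" using eqv_app[OF eqv_refl eqv_ss[OF yS]] .
    finally show "[w ! y, w ! x, w ! y] \<approx> [w ! x]" by simp
  qed
  have lA: "length (wd A) = length A" by (simp add: wd_def)
  have R: "\<And>j. j < length w \<Longrightarrow> refl_at [] (wd ?\<tau>) j = T (?\<tau> ! j)" using r by (simp add: realiz_def)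
  have R': "refl_at [] (wd ?\<tau>') j = T (?\<tau>' ! j)" if j: "j < length w" for j
  proof -
    consider (a) "j < length A" | (b) "j = length A" | (c) "j = Suc (length A)"
      | (d) "Suc (Suc (length A)) \<le> j" by linarith
    then show ?thesis
    proof cases
      case a
      have "refl_at [] (wd ?\<tau>') j = refl_at [] (wd A) j"
        unfolding wd_append using a lA by (simp add: refl_at_append1)
      also have "\<dots> = refl_at [] (wd ?\<tau>) j"
        unfolding wd_append using a lA by (simp add: refl_at_append1)
      also have "\<dots> = T (?\<tau> ! j)" using R j by simp
      finally show ?thesis using a by (simp add: nth_append)
    next
      case b
      have "refl_at [] (wd ?\<tau>') j = cls S E (wd A @ [w ! y] @ rev (wd A))"
        unfolding wdt' using b lA refl_at_append2[of "[]" "wd A" "[w ! y, w ! x] @ wd B" 0]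
        by (simp add: refl_at_def)
      also have "\<dots> = cls S E (wd A @ [w ! x, w ! y, w ! x] @ rev (wd A))"
        using xyx by (simp add: cls_eq_iff eqv_sym)
      also have "\<dots> = refl_at [] (wd ?\<tau>) (Suc j)"
        unfolding wdt using b lA refl_at_append2[of "[]" "wd A" "[w ! x, w ! y] @ wd B" 1]
        by (simp add: refl_at_def)
      also have "\<dots> = T (?\<tau> ! Suc j)" using R len b by simp
      finally show ?thesis using b by (simp add: nth_append)
    next
      case c
      have "refl_at [] (wd ?\<tau>') j = cls S E (wd A @ [w ! y, w ! x, w ! y] @ rev (wd A))"
        unfolding wdt' using c lA refl_at_append2[of "[]" "wd A" "[w ! y, w ! x] @ wd B" 1]
        by (simp add: refl_at_def)
      also have "\<dots> = cls S E (wd A @ [w ! x] @ rev (wd A))"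
        using yxy by (simp add: cls_eq_iff)
      also have "\<dots> = refl_at [] (wd ?\<tau>) (length A)"
        unfolding wdt using lA refl_at_append2[of "[]" "wd A" "[w ! x, w ! y] @ wd B" 0]
        by (simp add: refl_at_def)
      also have "\<dots> = T (?\<tau> ! length A)" using R len by simp
      finally show ?thesis using c by (simp add: nth_append)
    next
      case d
      define i where "i = j - Suc (Suc (length A))"
      have ji: "j = length (wd A @ [w ! y, w ! x]) + i" using d lA by (simp add: i_def)
      have ji': "j = length (wd A @ [w ! x, w ! y]) + i" using d lA by (simp add: i_def)
      have pre: "wd A @ [w ! y, w ! x] \<approx> wd A @ [w ! x, w ! y]"
        using eqv_swap[OF symE[OF e]] eqv_ctx[of "[w ! y, w ! x]" "[w ! x, w ! y]" "wd A" "[]"] by simp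
      have "refl_at [] (wd ?\<tau>') j = refl_at (wd A @ [w ! y, w ! x]) (wd B) i"
        using refl_at_append2[of "[]" "wd A @ [w ! y, w ! x]" "wd B" i] ji unfolding wdt' by simp
      also have "\<dots> = refl_at (wd A @ [w ! x, w ! y]) (wd B) i" using refl_at_cong[OF pre] .
      also have "\<dots> = refl_at [] (wd ?\<tau>) j"
        using refl_at_append2[of "[]" "wd A @ [w ! x, w ! y]" "wd B" i] ji' unfolding wdt by simp
      also have "\<dots> = T (?\<tau> ! j)" using R j by simp
      finally show ?thesis using d by (simp add: nth_append)
    qed
  qed
  show ?thesis unfolding realiz_def using d eq R' by blast
qed

lemma realiz_set_lt: "realiz \<tau> \<Longrightarrow> j < length w \<Longrightarrow> \<tau> ! j < length w"
  using realiz_length[of \<tau>] nth_mem[of j \<tau>] by (auto simp: realiz_def)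

lemma realiz_move:
  "realiz \<tau> \<Longrightarrow> k + d < length w \<Longrightarrow>
   (\<forall>q. k \<le> q \<longrightarrow> q < k + d \<longrightarrow> \<not> prec (\<tau> ! q) (\<tau> ! (k + d))) \<Longrightarrow>
   \<exists>\<tau>'. realiz \<tau>' \<and> take k \<tau>' = take k \<tau> \<and> \<tau>' ! k = \<tau> ! (k + d)"
proof (induction d arbitrary: \<tau>)
  case 0
  then show ?case by auto
next
  case (Suc d)
  let ?q = "k + d" and ?p = "k + Suc d"
  have r: "realiz \<tau>" using Suc.prems(1) .
  have len: "length \<tau> = length w" using realiz_length[OF r] .
  have np: "\<not> prec (\<tau> ! ?q) (\<tau> ! Suc ?q)" using Suc.prems(3) by simp
  have e: "E (w ! (\<tau> ! ?q)) (w ! (\<tau> ! Suc ?q))"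
    using realiz_prec_adj[OF r, of ?q] Suc.prems(2) np by auto
  define A where "A = take ?q \<tau>"
  define B where "B = drop (Suc (Suc ?q)) \<tau>"
  have dec: "\<tau> = A @ [\<tau> ! ?q, \<tau> ! Suc ?q] @ B"
  proof -
    have "\<tau> = take ?q \<tau> @ drop ?q \<tau>" by simp
    also have "drop ?q \<tau> = \<tau> ! ?q # drop (Suc ?q) \<tau>" using Suc.prems(2) len by (simp add: Cons_nth_drop_Suc)
    also have "drop (Suc ?q) \<tau> = \<tau> ! Suc ?q # drop (Suc (Suc ?q)) \<tau>" using Suc.prems(2) len by (simp add: Cons_nth_drop_Suc)
    finally show ?thesis by (simp add: A_def B_def)
  qed
  let ?\<tau>2 = "A @ [\<tau> ! Suc ?q, \<tau> ! ?q] @ B"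
  have r2: "realiz ?\<tau>2" using realiz_swap[OF _ e] r dec by metis
  have lA: "length A = ?q" using Suc.prems(2) len by (simp add: A_def)
  have t2q: "?\<tau>2 ! ?q = \<tau> ! ?p" using lA by (simp add: nth_append)
  have t2lt: "\<And>q. q < ?q \<Longrightarrow> ?\<tau>2 ! q = \<tau> ! q" using lA by (simp add: nth_append A_def)
  have take2: "take k ?\<tau>2 = take k \<tau>" using lA by (simp add: A_def take_append min_def)
  have "\<forall>q. k \<le> q \<longrightarrow> q < k + d \<longrightarrow> \<not> prec (?\<tau>2 ! q) (?\<tau>2 ! (k + d))"
  proof (intro allI impI)
    fix q assume "k \<le> q" "q < k + d"
    then show "\<not> prec (?\<tau>2 ! q) (?\<tau>2 ! (k + d))"
      using Suc.prems(3) t2q t2lt[of q] by simp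
  qed
  then obtain \<tau>' where "realiz \<tau>'" "take k \<tau>' = take k ?\<tau>2" "\<tau>' ! k = ?\<tau>2 ! (k + d)"
    using Suc.IH[OF r2] Suc.prems(2) by auto
  then show ?case using take2 t2q by auto
qed

lemma realiz_linext:
  assumes d: "distinct \<sigma>" and st: "set \<sigma> = {..<length w}"
    and so: "sorted_wrt (\<lambda>u v. \<not> prec v u) \<sigma>"
  shows "realiz \<sigma>"
proof -
  have ls: "length \<sigma> = length w" using d st distinct_card by fastforce
  have so': "\<And>i j. i < j \<Longrightarrow> j < length \<sigma> \<Longrightarrow> \<not> prec (\<sigma> ! j) (\<sigma> ! i)"
    using so by (simp add: sorted_wrt_iff_nth_less)
  have "\<forall>k\<le>length w. \<exists>\<tau>. realiz \<tau> \<and> take k \<tau> = take k \<sigma>"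
  proof (intro allI impI)
    fix k show "k \<le> length w \<Longrightarrow> \<exists>\<tau>. realiz \<tau> \<and> take k \<tau> = take k \<sigma>"
    proof (induction k)
      case 0
      then show ?case using realiz_id by auto
    next
      case (Suc k)
      then obtain \<tau> where r: "realiz \<tau>" and tk: "take k \<tau> = take k \<sigma>" by auto
      have k: "k < length w" using Suc.prems by simp
      have lt: "length \<tau> = length w" using realiz_length[OF r] .
      have dt: "distinct \<tau>" and stt: "set \<tau> = {..<length w}" using r by (auto simp: realiz_def)
      let ?x = "\<sigma> ! k"
      have "?x \<in> set \<tau>" using stt st k ls by (metis nth_mem)
      then obtain p where p: "p < length w" "\<tau> ! p = ?x" using lt by (metis in_set_conv_nth)
      have kp: "k \<le> p"
      proof (rule ccontr)
        assume "\<not> k \<le> p"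
        hence "p < k" by simp
        hence "\<tau> ! p = take k \<tau> ! p" by simp
        also have "\<dots> = \<sigma> ! p" using tk \<open>p < k\<close> by simp
        finally have "\<sigma> ! p = \<sigma> ! k" using p by simp
        then show False using d \<open>p < k\<close> k ls nth_eq_iff_index_eq by fastforce
      qed
      have cond: "\<forall>q. k \<le> q \<longrightarrow> q < k + (p - k) \<longrightarrow> \<not> prec (\<tau> ! q) (\<tau> ! (k + (p - k)))"
      proof (intro allI impI)
        fix q assume q: "k \<le> q" "q < k + (p - k)"
        have qp: "q < p" using q kp by simp
        have "\<tau> ! q \<in> set \<sigma>" using st stt qp p(1) lt by (metis nth_mem order.strict_trans)
        then obtain j where j: "j < length \<sigma>" "\<sigma> ! j = \<tau> ! q" by (metis in_set_conv_nth)
        have jk: "k < j"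
        proof (rule ccontr)
          assume "\<not> k < j"
          hence "j \<le> k" by simp
          show False
          proof (cases "j = k")
            case True
            hence "\<tau> ! q = \<tau> ! p" using j p by simp
            then show False using dt qp p(1) lt nth_eq_iff_index_eq by fastforce
          next
            case False
            hence jk': "j < k" using \<open>j \<le> k\<close> by simp
            have "\<tau> ! j = take k \<tau> ! j" using jk' by simp
            also have "\<dots> = \<sigma> ! j" using tk jk' by simp
            finally have "\<tau> ! j = \<tau> ! q" using j by simp
            moreover have "j < length \<tau>" "q < length \<tau>" using jk' k lt qp p(1) by auto
            ultimately have "j = q" using dt nth_eq_iff_index_eq by blast
            then show False using jk' q by simp
          qed
        qed
        have "\<not> prec (\<sigma> ! j) (\<sigma> ! k)" using so' jk j(1) by blast
        then show "\<not> prec (\<tau> ! q) (\<tau> ! (k + (p - k)))" using j p kp by simp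
      qed
      obtain \<tau>' where \<tau>': "realiz \<tau>'" "take k \<tau>' = take k \<tau>" "\<tau>' ! k = \<tau> ! (k + (p - k))"
        using realiz_move[OF r _ cond] p kp by auto
      have lt': "length \<tau>' = length w" using realiz_length[OF \<tau>'(1)] .
      have "take (Suc k) \<tau>' = take k \<tau>' @ [\<tau>' ! k]" using lt' k by (simp add: take_Suc_conv_app_nth)
      also have "\<dots> = take k \<sigma> @ [\<sigma> ! k]" using \<tau>' tk kp p by simp
      also have "\<dots> = take (Suc k) \<sigma>" using ls k by (simp add: take_Suc_conv_app_nth)
      finally show ?case using \<tau>'(1) by blast
    qed
  qed
  then obtain \<tau> where "realiz \<tau>" "take (length w) \<tau> = take (length w) \<sigma>" by blast
  moreover have "length \<tau> = length w" using realiz_length[OF \<open>realiz \<tau>\<close>] .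
  ultimately show ?thesis using ls by simp
qed

lemma sorted_upt_prec: "sorted_wrt (\<lambda>u v. \<not> prec v u) [0..<length w]"
  unfolding sorted_wrt_iff_nth_less
proof (intro allI impI notI)
  fix i j assume h: "i < j" "j < length [0..<length w]" "prec ([0..<length w] ! j) ([0..<length w] ! i)"
  hence "prec j i" by simp
  then have "j < i" using prec_less h by simp
  then show False using h by simp
qed

lemma incomparable_commute:
  assumes x: "x < length w" and y: "y < length w" and xy: "x \<noteq> y"
    and n1: "\<not> prec x y" and n2: "\<not> prec y x"
  shows "commute_el S E (T x) (T y)"
proof -
  let ?P = "\<lambda>z. prec z x \<or> prec z y"
  define L1 where "L1 = filter ?P [0..<length w]"
  define L2 where "L2 = filter (\<lambda>z. \<not> ?P z \<and> z \<noteq> x \<and> z \<noteq> y) [0..<length w]"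
  let ?\<sigma> = "L1 @ [x, y] @ L2"
  have xL1: "x \<notin> set L1" using prec_irrefl[OF x] n1 by (simp add: L1_def)
  have yL1: "y \<notin> set L1" using prec_irrefl[OF y] n2 by (simp add: L1_def)
  have d: "distinct ?\<sigma>" using xL1 yL1 xy by (auto simp: L1_def L2_def)
  have st: "set ?\<sigma> = {..<length w}" using x y by (auto simp: L1_def L2_def)
  let ?R = "\<lambda>u v. \<not> prec v u"
  have s1: "sorted_wrt ?R L1" unfolding L1_def by (rule sorted_wrt_filter[OF sorted_upt_prec])
  have s2: "sorted_wrt ?R L2" unfolding L2_def by (rule sorted_wrt_filter[OF sorted_upt_prec])
  have L1lt: "\<And>u. u \<in> set L1 \<Longrightarrow> u < length w" by (simp add: L1_def)
  have L2lt: "\<And>u. u \<in> set L2 \<Longrightarrow> u < length w" by (simp add: L2_def)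
  have c1: "\<And>u v. u \<in> set L1 \<Longrightarrow> v \<in> set ([x, y] @ L2) \<Longrightarrow> \<not> prec v u"
  proof -
    fix u v assume u: "u \<in> set L1" and v: "v \<in> set ([x, y] @ L2)"
    have ul: "u < length w" using L1lt u by simp
    have vl: "v < length w" using v L2lt x y by auto
    have pu: "prec u x \<or> prec u y" using u by (simp add: L1_def)
    show "\<not> prec v u"
    proof
      assume vu: "prec v u"
      have "prec v x \<or> prec v y" using pu prec_trans[OF vl ul x vu] prec_trans[OF vl ul y vu] by blast
      moreover have "v = x \<or> v = y \<or> v \<in> set L2" using v by auto
      ultimately show False using prec_irrefl[OF x] prec_irrefl[OF y] n1 n2 by (auto simp: L2_def)
    qed
  qed
  have c2: "\<And>v. v \<in> set L2 \<Longrightarrow> \<not> prec v x \<and> \<not> prec v y" by (simp add: L2_def)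
  have so: "sorted_wrt ?R ?\<sigma>"
    using s1 s2 c1 c2 n2 by (auto simp: sorted_wrt_append)
  have r: "realiz ?\<sigma>" by (rule realiz_linext[OF d st so])
  let ?j = "length L1"
  have lt: "length ?\<sigma> = length w" using realiz_length[OF r] .
  have j: "Suc ?j < length w" using lt by simp
  have sj: "?\<sigma> ! ?j = x" "?\<sigma> ! Suc ?j = y" by (simp_all add: nth_append)
  have e: "E (w ! x) (w ! y)"
  proof (rule ccontr)
    assume "\<not> E (w ! x) (w ! y)"
    hence "prec (?\<sigma> ! ?j) (?\<sigma> ! Suc ?j)" using realiz_prec_adj[OF r j] sj by simp
    then show False using sj n1 by simp
  qed
  have wl': "wd ?\<sigma> \<in> lists S" using wd_lists st by simp
  have lw: "length (wd ?\<sigma>) = length w" using lt by (simp add: wd_def)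
  have e': "E (wd ?\<sigma> ! ?j) (wd ?\<sigma> ! Suc ?j)" using e by (simp add: wd_def nth_append)
  have "commute_el S E (refl_at [] (wd ?\<sigma>) ?j) (refl_at [] (wd ?\<sigma>) (Suc ?j))"
    using adj_commute[OF wl' _ e'] j lw by simp
  moreover have "refl_at [] (wd ?\<sigma>) ?j = T x" "refl_at [] (wd ?\<sigma>) (Suc ?j) = T y"
    using r j sj unfolding realiz_def by auto
  ultimately show ?thesis by simp
qed

end



lemma distinct_concat_upt:
  "(\<And>i. i < n \<Longrightarrow> distinct (f i)) \<Longrightarrow>
   (\<And>i j. i < j \<Longrightarrow> j < n \<Longrightarrow> set (f i) \<inter> set (f j) = {}) \<Longrightarrow>
   distinct (concat (map f [0..<n]))"
proof (induction n)
  case 0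
  then show ?case by simp
next
  case (Suc n)
  have "distinct (concat (map f [0..<n]))" using Suc by auto
  moreover have "distinct (f n)" using Suc.prems by simp
  moreover have "set (concat (map f [0..<n])) \<inter> set (f n) = {}" using Suc.prems(2) by fastforce
  ultimately show ?case by simp
qed

lemma sorted_concat_upt:
  "(\<And>i. i < n \<Longrightarrow> sorted_wrt R (f i)) \<Longrightarrow>
   (\<And>i j x y. i < j \<Longrightarrow> j < n \<Longrightarrow> x \<in> set (f i) \<Longrightarrow> y \<in> set (f j) \<Longrightarrow> R x y) \<Longrightarrow>
   sorted_wrt R (concat (map f [0..<n]))"
proof (induction n)
  case 0
  then show ?case by simp
next
  case (Suc n)
  have "sorted_wrt R (concat (map f [0..<n]))" using Suc by auto
  moreover have "sorted_wrt R (f n)" using Suc.prems by simp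
  moreover have "\<forall>x\<in>set (concat (map f [0..<n])). \<forall>y\<in>set (f n). R x y" using Suc.prems(2) by fastforce
  ultimately show ?case by (simp add: sorted_wrt_append)
qed

locale cposet =
  fixes m :: nat and pr :: "nat \<Rightarrow> nat \<Rightarrow> bool" and K :: nat
  assumes irr: "k < m \<Longrightarrow> \<not> pr k k"
    and trans: "k < m \<Longrightarrow> l < m \<Longrightarrow> q < m \<Longrightarrow> pr k l \<Longrightarrow> pr l q \<Longrightarrow> pr k q"
    and lin: "k < m \<Longrightarrow> l < m \<Longrightarrow> pr k l \<Longrightarrow> k < l"
    and bnd: "A \<subseteq> {..<m} \<Longrightarrow> B \<subseteq> {..<m} \<Longrightarrow> A \<inter> B = {} \<Longrightarrow>
       (\<forall>a\<in>A. \<forall>b\<in>B. \<not> pr a b \<and> \<not> pr b a) \<Longrightarrow> min (card A) (card B) \<le> K"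
begin

definition inc :: "nat \<Rightarrow> nat \<Rightarrow> bool" where
  "inc a b \<longleftrightarrow> a \<noteq> b \<and> \<not> pr a b \<and> \<not> pr b a"

definition chain :: "nat set \<Rightarrow> bool" where
  "chain Z \<longleftrightarrow> Z \<subseteq> {..<m} \<and> (\<forall>a\<in>Z. \<forall>b\<in>Z. a \<noteq> b \<longrightarrow> pr a b \<or> pr b a)"

definition antichain :: "nat set \<Rightarrow> bool" where
  "antichain X \<longleftrightarrow> X \<subseteq> {..<m} \<and> (\<forall>a\<in>X. \<forall>b\<in>X. a \<noteq> b \<longrightarrow> \<not> pr a b)"

definition Inc :: "nat \<Rightarrow> nat set" where "Inc c = {v \<in> {..<m}. inc v c}"

lemma width: "antichain X \<Longrightarrow> card X \<le> 2 * K + 1"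
proof (rule ccontr)
  assume X: "antichain X" and "\<not> card X \<le> 2 * K + 1"
  hence c: "Suc K \<le> card X" by simp
  have fin: "finite X" using X finite_subset[of X "{..<m}"] by (simp add: antichain_def)
  obtain A where A: "A \<subseteq> X" "card A = Suc K" "finite A" by (rule obtain_subset_with_card_n[OF c])
  let ?B = "X - A"
  have "card ?B = card X - Suc K" using A fin by (simp add: card_Diff_subset finite_subset)
  hence cB: "Suc K \<le> card ?B" using \<open>\<not> card X \<le> 2 * K + 1\<close> by simp
  have "min (card A) (card ?B) \<le> K"
  proof (rule bnd)
    show "A \<subseteq> {..<m}" "?B \<subseteq> {..<m}" using A X by (auto simp: antichain_def)
    show "A \<inter> ?B = {}" by auto
    show "\<forall>a\<in>A. \<forall>b\<in>?B. \<not> pr a b \<and> \<not> pr b a"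
    proof (intro ballI)
      fix a b assume ab: "a \<in> A" "b \<in> ?B"
      have h: "\<forall>a\<in>X. \<forall>b\<in>X. a \<noteq> b \<longrightarrow> \<not> pr a b" using X by (simp add: antichain_def)
      have aX: "a \<in> X" using ab A(1) by (rule_tac subsetD) auto
      have bX: "b \<in> X" using ab by simp
      have ne: "a \<noteq> b" using ab by auto
      have "\<not> pr a b" using h aX bX ne by simp
      moreover have "\<not> pr b a" using h aX bX ne by simp
      ultimately show "\<not> pr a b \<and> \<not> pr b a" by simp
    qed
  qed
  then show False using A cB by simp
qed

lemma chain_finite: "chain Z \<Longrightarrow> finite Z"
  using finite_subset[of Z "{..<m}"] by (simp add: chain_def)

lemma mirsky:
  "N \<subseteq> {..<m} \<Longrightarrow> (\<And>Z. chain Z \<Longrightarrow> Z \<subseteq> N \<Longrightarrow> card Z \<le> h) \<Longrightarrow> card N \<le> h * (2 * K + 1)"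
proof (induction h arbitrary: N)
  case 0
  have "N = {}"
  proof (rule ccontr)
    assume "N \<noteq> {}"
    then obtain x where "x \<in> N" by blast
    hence c1: "chain {x}" and c2: "{x} \<subseteq> N" using 0 by (auto simp: chain_def)
    have "card {x} \<le> 0" by (rule "0.prems"(2)[OF c1 c2])
    then show False by simp
  qed
  then show ?case by simp
next
  case (Suc h)
  let ?M = "{x \<in> N. \<forall>y\<in>N. \<not> pr y x}"
  have finN: "finite N" using Suc.prems(1) by (rule finite_subset) simp
  have anti: "antichain ?M" unfolding antichain_def
  proof (intro conjI ballI impI)
    show "?M \<subseteq> {..<m}" using Suc.prems(1) by auto
  next
    fix a b assume "a \<in> ?M" "b \<in> ?M" "a \<noteq> b"
    then show "\<not> pr a b" by blast
  qed
  have cM: "card ?M \<le> 2 * K + 1" by (rule width[OF anti])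
  have "card (N - ?M) \<le> h * (2 * K + 1)"
  proof (rule Suc.IH)
    show "N - ?M \<subseteq> {..<m}" using Suc.prems(1) by auto
  next
    fix Z assume Z: "chain Z" "Z \<subseteq> N - ?M"
    show "card Z \<le> h"
    proof (cases "Z = {}")
      case True
      then show ?thesis by simp
    next
      case False
      have finZ: "finite Z" using chain_finite[OF Z(1)] .
      define z0 where "z0 = Min Z"
      have z0Z: "z0 \<in> Z" using finZ False by (simp add: z0_def)
      have z0min: "\<And>z. z \<in> Z \<Longrightarrow> z \<noteq> z0 \<Longrightarrow> pr z0 z"
      proof -
        fix z assume z: "z \<in> Z" "z \<noteq> z0"
        have "pr z z0 \<or> pr z0 z" using Z(1) z z0Z by (auto simp: chain_def)
        moreover have "z0 \<le> z" using finZ z by (simp add: z0_def)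
        moreover have "z < m" "z0 < m" using Z(1) z z0Z by (auto simp: chain_def)
        ultimately show "pr z0 z"
        proof -
          assume disj: "pr z z0 \<or> pr z0 z" and le: "z0 \<le> z" and lt: "z < m" "z0 < m"
          have "\<not> pr z z0"
          proof
            assume "pr z z0"
            hence "z < z0" using lin lt by blast
            then show False using le by simp
          qed
          then show ?thesis using disj by blast
        qed
      qed
      have z0N: "z0 \<in> N" "z0 \<notin> ?M" using Z(2) z0Z by auto
      then obtain y where y: "y \<in> N" "pr y z0" by auto
      let ?Y = "{y \<in> N. pr y z0}"
      have Yne: "?Y \<noteq> {}" using y by blast
      have finY: "finite ?Y" using finN by simp
      define y0 where "y0 = Min ?Y"
      have y0Y: "y0 \<in> ?Y" unfolding y0_def by (rule Min_in[OF finY Yne])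
      have y0M: "y0 \<in> ?M"
      proof (rule ccontr)
        assume "y0 \<notin> ?M"
        then obtain y' where y': "y' \<in> N" "pr y' y0" using y0Y by auto
        have lt: "y' < m" "y0 < m" "z0 < m" using Suc.prems(1) y' y0Y z0N by auto
        have "pr y' z0" using trans[OF lt(1) lt(2) lt(3) y'(2)] y0Y by simp
        hence "y' \<in> ?Y" using y' by simp
        hence "y0 \<le> y'" using finY by (simp add: y0_def)
        moreover have "y' < y0" using lin[OF lt(1) lt(2) y'(2)] .
        ultimately show False by simp
      qed
      have y0Z: "y0 \<notin> Z" using y0M Z(2) by auto
      have "chain (insert y0 Z)" unfolding chain_def
      proof (intro conjI ballI impI)
        show "insert y0 Z \<subseteq> {..<m}" using Z(1) y0Y Suc.prems(1) by (auto simp: chain_def)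
      next
        fix a b assume ab: "a \<in> insert y0 Z" "b \<in> insert y0 Z" "a \<noteq> b"
        have py: "\<And>z. z \<in> Z \<Longrightarrow> pr y0 z"
        proof -
          fix z assume z: "z \<in> Z"
          show "pr y0 z"
          proof (cases "z = z0")
            case True
            then show ?thesis using y0Y by simp
          next
            case False
            have lt: "y0 < m" "z0 < m" "z < m" using Suc.prems(1) y0Y z0N Z z by auto
            show ?thesis using trans[OF lt] y0Y z0min[OF z False] by simp
          qed
        qed
        from ab consider (1) "a = y0" "b \<in> Z" | (2) "b = y0" "a \<in> Z" | (3) "a \<in> Z" "b \<in> Z"
          by blast
        then show "pr a b \<or> pr b a"
        proof cases
          case 1
          then show ?thesis using py by blast
        next
          case 2
          then show ?thesis using py by blast
        next
          case 3
          then show ?thesis using Z(1) ab(3) unfolding chain_def by blast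
        qed
      qed
      moreover have "insert y0 Z \<subseteq> N" using Z(2) y0Y by auto
      ultimately have "card (insert y0 Z) \<le> Suc h" using Suc.prems(2) by blast
      then show ?thesis using y0Z finZ by simp
    qed
  qed
  moreover have "card N \<le> card ?M + card (N - ?M)"
  proof -
    have eq: "?M \<union> (N - ?M) = N" by auto
    show ?thesis using card_Un_le[of ?M "N - ?M"] unfolding eq .
  qed
  ultimately show ?case using cM by simp
qed

lemma chains_finite: "finite {Z. chain Z}"
proof -
  have "{Z. chain Z} \<subseteq> Pow {..<m}" by (auto simp: chain_def)
  then show ?thesis by (rule finite_subset) simp
qed

lemma longest: "\<exists>C. chain C \<and> (\<forall>C'. chain C' \<longrightarrow> card C' \<le> card C)"
proof -
  let ?cs = "card ` {Z. chain Z}"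
  have ne: "?cs \<noteq> {}" using chain_def by auto
  have fin: "finite ?cs" using chains_finite by simp
  have "Max ?cs \<in> ?cs" by (rule Max_in[OF fin ne])
  then obtain C where C: "chain C" "card C = Max ?cs" by auto
  have "\<forall>C'. chain C' \<longrightarrow> card C' \<le> card C"
  proof (intro allI impI)
    fix C' assume "chain C'"
    hence "card C' \<in> ?cs" by simp
    then show "card C' \<le> card C" using Max_ge[OF fin] C by simp
  qed
  then show ?thesis using C by blast
qed

definition R0 :: nat where "R0 = 2 * K + (2 * K + 1) * (2 * K + 1)"

lemma decomposition:
  "\<exists>cs Vs. length Vs = length cs \<and> set cs \<subseteq> {..<m} \<and>
     (\<forall>i j. i < j \<longrightarrow> j < length cs \<longrightarrow> pr (cs ! i) (cs ! j)) \<and>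
     distinct (concat (map (\<lambda>i. cs ! i # Vs ! i) [0..<length cs])) \<and>
     set (concat (map (\<lambda>i. cs ! i # Vs ! i) [0..<length cs])) = {..<m} \<and>
     sorted_wrt (\<lambda>u v. \<not> pr v u) (concat (map (\<lambda>i. cs ! i # Vs ! i) [0..<length cs])) \<and>
     (\<forall>i<length cs. \<forall>v\<in>set (Vs ! i). inc v (cs ! i)) \<and>
     (\<forall>i<length cs. length (Vs ! i) \<le> R0) \<and>
     (\<forall>i<length cs. card (Inc (cs ! i)) \<le> R0)"
proof -
  obtain C where C: "chain C" and Cmax: "\<And>C'. chain C' \<Longrightarrow> card C' \<le> card C"
    using longest by blast
  have Cm: "C \<subseteq> {..<m}" using C by (simp add: chain_def)
  define cs where "cs = filter (\<lambda>x. x \<in> C) [0..<m]"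
  define n where "n = length cs"
  have set_cs: "set cs = C" using Cm by (auto simp: cs_def)
  have dist_cs: "distinct cs" by (simp add: cs_def)
  have n_card: "n = card C" using distinct_card[OF dist_cs] set_cs by (simp add: n_def)
  have sorted_cs: "sorted_wrt (<) cs" unfolding cs_def
    by (rule sorted_wrt_filter) (simp add: sorted_wrt_iff_nth_less)
  have cs_lt: "\<And>i. i < n \<Longrightarrow> cs ! i < m" using set_cs Cm n_def nth_mem by blast
  have cs_less: "\<And>i j. i < j \<Longrightarrow> j < n \<Longrightarrow> cs ! i < cs ! j"
    using sorted_cs n_def by (simp add: sorted_wrt_iff_nth_less)
  have cs_pr: "\<And>i j. i < j \<Longrightarrow> j < n \<Longrightarrow> pr (cs ! i) (cs ! j)"
  proof -
    fix i j assume ij: "i < j" "j < n"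
    have lt: "cs ! i < cs ! j" using cs_less ij by blast
    have mem: "cs ! i \<in> C" "cs ! j \<in> C" using ij set_cs n_def nth_mem by (metis order.strict_trans)+
    have "pr (cs ! i) (cs ! j) \<or> pr (cs ! j) (cs ! i)" using C mem lt unfolding chain_def by auto
    moreover have "\<not> pr (cs ! j) (cs ! i)"
    proof
      assume "pr (cs ! j) (cs ! i)"
      moreover have "cs ! j < m" "cs ! i < m" using cs_lt ij by auto
      ultimately have "cs ! j < cs ! i" using lin by blast
      then show False using lt by simp
    qed
    ultimately show "pr (cs ! i) (cs ! j)" by blast
  qed
  have cs_inj: "\<And>i j. i < n \<Longrightarrow> j < n \<Longrightarrow> cs ! i = cs ! j \<Longrightarrow> i = j"
    using dist_cs n_def nth_eq_iff_index_eq by blast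
  have inC: "\<And>v. v \<in> C \<Longrightarrow> \<exists>i<n. cs ! i = v" using set_cs n_def by (metis in_set_conv_nth)
  have inc_notC: "\<And>v i. i < n \<Longrightarrow> inc v (cs ! i) \<Longrightarrow> v \<notin> C"
  proof
    fix v i assume i: "i < n" and iv: "inc v (cs ! i)" and vC: "v \<in> C"
    obtain j where j: "j < n" "cs ! j = v" using inC[OF vC] by blast
    have "i \<noteq> j" using iv j by (auto simp: inc_def)
    then have "pr (cs ! i) (cs ! j) \<or> pr (cs ! j) (cs ! i)" using cs_pr i j(1) by (metis linorder_neqE_nat)
    then show False using iv j by (auto simp: inc_def)
  qed
  have maxc: "\<And>v. v < m \<Longrightarrow> v \<notin> C \<Longrightarrow> \<exists>i<n. inc v (cs ! i)"
  proof (rule ccontr)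
    fix v assume v: "v < m" "v \<notin> C" and nex: "\<not> (\<exists>i<n. inc v (cs ! i))"
    have "chain (insert v C)" unfolding chain_def
    proof (intro conjI ballI impI)
      show "insert v C \<subseteq> {..<m}" using v Cm by auto
    next
      fix a b assume ab: "a \<in> insert v C" "b \<in> insert v C" "a \<noteq> b"
      have cmp: "\<And>c. c \<in> C \<Longrightarrow> pr v c \<or> pr c v"
      proof -
        fix c assume c: "c \<in> C"
        obtain i where i: "i < n" "cs ! i = c" using inC[OF c] by blast
        have "\<not> inc v c" using nex i by blast
        moreover have "v \<noteq> c" using v c by auto
        ultimately show "pr v c \<or> pr c v" by (simp add: inc_def)
      qed
      from ab consider (1) "a = v" "b \<in> C" | (2) "b = v" "a \<in> C" | (3) "a \<in> C" "b \<in> C" by blast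
      then show "pr a b \<or> pr b a"
      proof cases
        case 1 then show ?thesis using cmp by blast
      next
        case 2 then show ?thesis using cmp by blast
      next
        case 3 then show ?thesis using C ab(3) unfolding chain_def by blast
      qed
    qed
    hence "card (insert v C) \<le> card C" by (rule Cmax)
    moreover have "finite C" using chain_finite[OF C] .
    ultimately show False using v(2) by simp
  qed
  define l where "l v = (LEAST i. i < n \<and> inc v (cs ! i))" for v
  have l_props: "\<And>v. v < m \<Longrightarrow> v \<notin> C \<Longrightarrow> l v < n \<and> inc v (cs ! l v) \<and> (\<forall>i<l v. \<not> inc v (cs ! i))"
  proof -
    fix v assume v: "v < m" "v \<notin> C"
    obtain i where i: "i < n" "inc v (cs ! i)" using maxc[OF v] by blast
    have a: "l v < n \<and> inc v (cs ! l v)" unfolding l_def by (rule LeastI[of _ i]) (use i in blast)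
    have b: "\<forall>j<l v. \<not> inc v (cs ! j)"
    proof (intro allI impI notI)
      fix j assume j: "j < l v" "inc v (cs ! j)"
      have "j < n" using j a by simp
      hence "l v \<le> j" unfolding l_def using j(2) by (intro Least_le) blast
      then show False using j by simp
    qed
    show "l v < n \<and> inc v (cs ! l v) \<and> (\<forall>i<l v. \<not> inc v (cs ! i))" using a b by blast
  qed
  have cmp_before: "\<And>v j. v < m \<Longrightarrow> v \<notin> C \<Longrightarrow> j < l v \<Longrightarrow> pr v (cs ! j) \<or> pr (cs ! j) v"
  proof -
    fix v j assume v: "v < m" "v \<notin> C" and j: "j < l v"
    have jn: "j < n" using j l_props[OF v] by simp
    have "\<not> inc v (cs ! j)" using l_props[OF v] j by blast
    moreover have "v \<noteq> cs ! j" using v jn set_cs n_def nth_mem by metis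
    ultimately show "pr v (cs ! j) \<or> pr (cs ! j) v" by (simp add: inc_def)
  qed
  define Vs where "Vs = map (\<lambda>i. filter (\<lambda>v. v \<notin> C \<and> l v = i) [0..<m]) [0..<n]"
  have lVs: "length Vs = n" by (simp add: Vs_def)
  have Vs_i: "\<And>i. i < n \<Longrightarrow> set (Vs ! i) = {v. v < m \<and> v \<notin> C \<and> l v = i}" by (auto simp: Vs_def)
  have Vs_dist: "\<And>i. i < n \<Longrightarrow> distinct (Vs ! i)" by (simp add: Vs_def)
  have Vs_inc: "\<And>i v. i < n \<Longrightarrow> v \<in> set (Vs ! i) \<Longrightarrow> inc v (cs ! i)"
    using Vs_i l_props by auto
  define blk where "blk i = cs ! i # Vs ! i" for i
  let ?\<sigma> = "concat (map blk [0..<n])"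
  have set_\<sigma>: "set ?\<sigma> = {..<m}"
  proof
    show "set ?\<sigma> \<subseteq> {..<m}" using cs_lt Vs_i by (auto simp: blk_def)
  next
    show "{..<m} \<subseteq> set ?\<sigma>"
    proof
      fix v assume "v \<in> {..<m}"
      hence v: "v < m" by simp
      show "v \<in> set ?\<sigma>"
      proof (cases "v \<in> C")
        case True
        then obtain i where "i < n" "cs ! i = v" using inC by blast
        then show ?thesis by (force simp: blk_def)
      next
        case False
        have "l v < n" using l_props[OF v False] by simp
        moreover have "v \<in> set (Vs ! l v)" using Vs_i[OF \<open>l v < n\<close>] v False by simp
        ultimately show ?thesis by (force simp: blk_def)
      qed
    qed
  qed
  have dist_\<sigma>: "distinct ?\<sigma>"
  proof (rule distinct_concat_upt)
    fix i assume i: "i < n"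
    have "cs ! i \<notin> set (Vs ! i)" using Vs_i[OF i] set_cs i n_def nth_mem by auto
    then show "distinct (blk i)" using Vs_dist[OF i] by (simp add: blk_def)
  next
    fix i j assume ij: "i < j" "j < n"
    have i: "i < n" using ij by simp
    have "cs ! i \<noteq> cs ! j" using cs_inj[OF i ij(2)] ij by auto
    moreover have "cs ! i \<notin> set (Vs ! j)" using Vs_i[OF ij(2)] set_cs i n_def nth_mem by auto
    moreover have "cs ! j \<notin> set (Vs ! i)" using Vs_i[OF i] set_cs ij(2) n_def nth_mem by auto
    moreover have "set (Vs ! i) \<inter> set (Vs ! j) = {}" using Vs_i[OF i] Vs_i[OF ij(2)] ij by auto
    ultimately show "set (blk i) \<inter> set (blk j) = {}" by (auto simp: blk_def)
  qed
  have sorted_\<sigma>: "sorted_wrt (\<lambda>u v. \<not> pr v u) ?\<sigma>"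
  proof (rule sorted_concat_upt)
    fix i assume i: "i < n"
    have s1: "sorted_wrt (\<lambda>u v. \<not> pr v u) (Vs ! i)"
    proof -
      have "sorted_wrt (\<lambda>u v. \<not> pr v u) [0..<m]"
        unfolding sorted_wrt_iff_nth_less
      proof (intro allI impI notI)
        fix a b assume h: "a < b" "b < length [0..<m]" "pr ([0..<m] ! b) ([0..<m] ! a)"
        hence "pr b a" by simp
        hence "b < a" using lin h by simp
        then show False using h by simp
      qed
      then show ?thesis unfolding Vs_def using i by (simp add: sorted_wrt_filter)
    qed
    have s2: "\<forall>v\<in>set (Vs ! i). \<not> pr v (cs ! i)" using Vs_inc[OF i] by (simp add: inc_def)
    show "sorted_wrt (\<lambda>u v. \<not> pr v u) (blk i)" using s1 s2 by (simp add: blk_def)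
  next
    fix i j x y assume ij: "i < j" "j < n" and x: "x \<in> set (blk i)" and y: "y \<in> set (blk j)"
    have i: "i < n" using ij by simp
    have cij: "pr (cs ! i) (cs ! j)" using cs_pr ij by blast
    have lti: "cs ! i < m" and ltj: "cs ! j < m" using cs_lt i ij(2) by auto
    show "\<not> pr y x"
    proof
      assume yx: "pr y x"
      consider (a) "x = cs ! i" "y = cs ! j" | (b) "x = cs ! i" "y \<in> set (Vs ! j)"
        | (c) "x \<in> set (Vs ! i)" "y = cs ! j" | (d) "x \<in> set (Vs ! i)" "y \<in> set (Vs ! j)"
        using x y by (auto simp: blk_def)
      then show False
      proof cases
        case a
        then show ?thesis using yx cs_less[OF ij] lin[OF ltj lti] by fastforce
      next
        case b
        have yl: "y < m" using b Vs_i ij by auto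
        have "inc y (cs ! j)" using Vs_inc[OF ij(2) b(2)] .
        moreover have "pr y (cs ! j)" using trans[OF yl lti ltj] yx b cij by simp
        ultimately show False by (simp add: inc_def)
      next
        case c
        have xl: "x < m" using c Vs_i i by auto
        have "inc x (cs ! i)" using Vs_inc[OF i c(1)] .
        moreover have "pr (cs ! i) x" using trans[OF lti ltj xl] yx c cij by simp
        ultimately show False by (simp add: inc_def)
      next
        case d
        have xl: "x < m" and xC: "x \<notin> C" and lx: "l x = i" using d Vs_i i by auto
        have yl: "y < m" and yC: "y \<notin> C" and ly: "l y = j" using d Vs_i ij by auto
        have "pr y (cs ! i) \<or> pr (cs ! i) y" using cmp_before[OF yl yC] ly ij by simp
        then show False
        proof
          assume "pr y (cs ! i)"
          hence "pr y (cs ! j)" using trans[OF yl lti ltj] cij by simp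
          then show False using Vs_inc[OF ij(2) d(2)] by (simp add: inc_def)
        next
          assume "pr (cs ! i) y"
          hence "pr (cs ! i) x" using trans[OF lti yl xl] yx by simp
          then show False using Vs_inc[OF i d(1)] by (simp add: inc_def)
        qed
      qed
    qed
  qed
  have deg: "card (Inc (cs ! i)) \<le> R0" if i: "i < n" for i
  proof -
    let ?c = "\<lambda>j. cs ! j"
    let ?I = "Inc (cs ! i)"
    have finI: "finite ?I" by (simp add: Inc_def)
    have I_notC: "\<And>v. v \<in> ?I \<Longrightarrow> v \<notin> C" using inc_notC[OF i] by (simp add: Inc_def)
    define IR where "IR = {v \<in> ?I. i + K < n \<and> inc v (cs ! (i + K))}"
    define IL where "IL = {v \<in> ?I. K \<le> i \<and> inc v (cs ! (i - K))}"
    define IN where "IN = ?I - IR - IL"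
    have split: "?I \<subseteq> IR \<union> IL \<union> IN" by (auto simp: IN_def)
    have cIR: "card IR \<le> K"
    proof (cases "i + K < n")
      case False
      then show ?thesis by (simp add: IR_def)
    next
      case True
      let ?A = "?c ` {i..i + K}"
      have cA: "card ?A = Suc K"
      proof -
        have "inj_on ?c {i..i + K}" using cs_inj True by (intro inj_onI) auto
        then show ?thesis by (simp add: card_image)
      qed
      have "min (card ?A) (card IR) \<le> K"
      proof (rule bnd)
        show "?A \<subseteq> {..<m}" using cs_lt True by auto
        show "IR \<subseteq> {..<m}" by (auto simp: IR_def Inc_def)
        show "?A \<inter> IR = {}"
        proof -
          { fix x assume x1: "x \<in> ?A" and x2: "x \<in> IR"
            then obtain j where "j \<in> {i..i + K}" "x = cs ! j" by auto
            hence "x \<in> C" using True set_cs n_def nth_mem by auto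
            moreover have "x \<notin> C" using x2 I_notC by (simp add: IR_def)
            ultimately have False by simp }
          then show ?thesis by blast
        qed
        show "\<forall>a\<in>?A. \<forall>b\<in>IR. \<not> pr a b \<and> \<not> pr b a"
        proof (intro ballI)
          fix a b assume a: "a \<in> ?A" and b: "b \<in> IR"
          then obtain j where j: "i \<le> j" "j \<le> i + K" "a = cs ! j" by auto
          have jn: "j < n" using j True by simp
          have bl: "b < m" using b by (simp add: IR_def Inc_def)
          have bi: "inc b (cs ! i)" and bk: "inc b (cs ! (i + K))" using b by (auto simp: IR_def Inc_def)
          have "\<not> pr a b"
          proof
            assume ab: "pr a b"
            have "pr (cs ! i) b"
            proof (cases "i = j")
              case True then show ?thesis using ab j by simp
            next
              case False
              hence "pr (cs ! i) (cs ! j)" using cs_pr j jn by simp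
              then show ?thesis using trans[OF cs_lt[OF i] cs_lt[OF jn] bl] ab j by simp
            qed
            then show False using bi by (simp add: inc_def)
          qed
          moreover have "\<not> pr b a"
          proof
            assume ba: "pr b a"
            have "pr b (cs ! (i + K))"
            proof (cases "j = i + K")
              case True then show ?thesis using ba j by simp
            next
              case False
              hence "pr (cs ! j) (cs ! (i + K))" using cs_pr j True by simp
              then show ?thesis using trans[OF bl cs_lt[OF jn] cs_lt[OF \<open>i + K < n\<close>]] ba j by simp
            qed
            then show False using bk by (simp add: inc_def)
          qed
          ultimately show "\<not> pr a b \<and> \<not> pr b a" by simp
        qed
      qed
      then show ?thesis using cA by simp
    qed
    have cIL: "card IL \<le> K"
    proof (cases "K \<le> i")
      case False
      then show ?thesis by (simp add: IL_def)
    next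
      case True
      let ?A = "?c ` {i - K..i}"
      have cA: "card ?A = Suc K"
      proof -
        have "inj_on ?c {i - K..i}" using cs_inj i by (intro inj_onI) auto
        then show ?thesis using True by (simp add: card_image)
      qed
      have "min (card ?A) (card IL) \<le> K"
      proof (rule bnd)
        show "?A \<subseteq> {..<m}" using cs_lt i by auto
        show "IL \<subseteq> {..<m}" by (auto simp: IL_def Inc_def)
        show "?A \<inter> IL = {}"
        proof -
          { fix x assume x1: "x \<in> ?A" and x2: "x \<in> IL"
            then obtain j where "j \<in> {i - K..i}" "x = cs ! j" by auto
            hence "x \<in> C" using i set_cs n_def nth_mem by auto
            moreover have "x \<notin> C" using x2 I_notC by (simp add: IL_def)
            ultimately have False by simp }
          then show ?thesis by blast
        qed
        show "\<forall>a\<in>?A. \<forall>b\<in>IL. \<not> pr a b \<and> \<not> pr b a"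
        proof (intro ballI)
          fix a b assume a: "a \<in> ?A" and b: "b \<in> IL"
          then obtain j where j: "i - K \<le> j" "j \<le> i" "a = cs ! j" by auto
          have jn: "j < n" using j i by simp
          have ikn: "i - K < n" using i by simp
          have bl: "b < m" using b by (simp add: IL_def Inc_def)
          have bi: "inc b (cs ! i)" and bk: "inc b (cs ! (i - K))" using b by (auto simp: IL_def Inc_def)
          have "\<not> pr b a"
          proof
            assume ba: "pr b a"
            have "pr b (cs ! i)"
            proof (cases "i = j")
              case True then show ?thesis using ba j by simp
            next
              case False
              hence "pr (cs ! j) (cs ! i)" using cs_pr j i by simp
              then show ?thesis using trans[OF bl cs_lt[OF jn] cs_lt[OF i]] ba j by simp
            qed
            then show False using bi by (simp add: inc_def)
          qed
          moreover have "\<not> pr a b"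
          proof
            assume ab: "pr a b"
            have "pr (cs ! (i - K)) b"
            proof (cases "j = i - K")
              case True then show ?thesis using ab j by simp
            next
              case False
              hence "pr (cs ! (i - K)) (cs ! j)" using cs_pr j jn by simp
              then show ?thesis using trans[OF cs_lt[OF ikn] cs_lt[OF jn] bl] ab j by simp
            qed
            then show False using bk by (simp add: inc_def)
          qed
          ultimately show "\<not> pr a b \<and> \<not> pr b a" by simp
        qed
      qed
      then show ?thesis using cA by simp
    qed
    have cIN: "card IN \<le> (2 * K + 1) * (2 * K + 1)"
    proof (rule mirsky)
      show "IN \<subseteq> {..<m}" by (auto simp: IN_def Inc_def)
    next
      fix Z assume Z: "chain Z" "Z \<subseteq> IN"
      have finZ: "finite Z" using chain_finite[OF Z(1)] .
      have Zl: "\<And>z. z \<in> Z \<Longrightarrow> z < m" using Z(1) by (auto simp: chain_def)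
      have ZI: "\<And>z. z \<in> Z \<Longrightarrow> inc z (cs ! i)" using Z(2) by (auto simp: IN_def Inc_def)
      have ZC: "\<And>z. z \<in> Z \<Longrightarrow> z \<notin> C" using Z(2) I_notC by (auto simp: IN_def)
      let ?Lo = "set (take (i - K) cs)" and ?Hi = "set (drop (Suc (i + K)) cs)"
      have lo_pr: "\<And>z c. z \<in> Z \<Longrightarrow> c \<in> ?Lo \<Longrightarrow> pr c z"
      proof -
        fix z c assume z: "z \<in> Z" and c: "c \<in> ?Lo"
        obtain j where j: "j < i - K" "c = cs ! j" using c by (auto simp: in_set_conv_nth)
        have Ki: "K \<le> i" "i - K < n" using j i by auto
        have zIL: "z \<notin> IL" using Z(2) z by (auto simp: IN_def)
        have nz: "\<not> inc z (cs ! (i - K))" using zIL Z(2) z Ki by (auto simp: IN_def IL_def)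
        have zne: "z \<noteq> cs ! (i - K)" using ZC[OF z] Ki set_cs n_def nth_mem by metis
        have zc: "pr z (cs ! (i - K)) \<or> pr (cs ! (i - K)) z" using nz zne by (simp add: inc_def)
        have p1: "pr (cs ! (i - K)) z"
        proof (rule ccontr)
          assume "\<not> pr (cs ! (i - K)) z"
          hence zk: "pr z (cs ! (i - K))" using zc by simp
          have "pr z (cs ! i)"
          proof (cases "K = 0")
            case True then show ?thesis using zk by simp
          next
            case False
            hence "pr (cs ! (i - K)) (cs ! i)" using cs_pr i Ki by simp
            then show ?thesis using trans[OF Zl[OF z] cs_lt[OF Ki(2)] cs_lt[OF i]] zk by simp
          qed
          then show False using ZI[OF z] by (simp add: inc_def)
        qed
        have jn: "j < n" using j Ki by simp
        have "pr (cs ! j) (cs ! (i - K))" using cs_pr j Ki by simp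
        then show "pr c z" using trans[OF cs_lt[OF jn] cs_lt[OF Ki(2)] Zl[OF z]] p1 j by simp
      qed
      have hi_pr: "\<And>z c. z \<in> Z \<Longrightarrow> c \<in> ?Hi \<Longrightarrow> pr z c"
      proof -
        fix z c assume z: "z \<in> Z" and c: "c \<in> ?Hi"
        obtain j where j: "j < length cs - Suc (i + K)" "c = cs ! (Suc (i + K) + j)"
          using c by (auto simp: in_set_conv_nth)
        have Ki: "i + K < n" using j n_def by simp
        have zIR: "z \<notin> IR" using Z(2) z by (auto simp: IN_def)
        have nz: "\<not> inc z (cs ! (i + K))" using zIR Z(2) z Ki by (auto simp: IN_def IR_def)
        have zne: "z \<noteq> cs ! (i + K)" using ZC[OF z] Ki set_cs n_def nth_mem by metis
        have zc: "pr z (cs ! (i + K)) \<or> pr (cs ! (i + K)) z" using nz zne by (simp add: inc_def)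
        have p1: "pr z (cs ! (i + K))"
        proof (rule ccontr)
          assume "\<not> pr z (cs ! (i + K))"
          hence zk: "pr (cs ! (i + K)) z" using zc by simp
          have "pr (cs ! i) z"
          proof (cases "K = 0")
            case True then show ?thesis using zk by simp
          next
            case False
            hence "pr (cs ! i) (cs ! (i + K))" using cs_pr Ki by simp
            then show ?thesis using trans[OF cs_lt[OF i] cs_lt[OF Ki] Zl[OF z]] zk by simp
          qed
          then show False using ZI[OF z] by (simp add: inc_def)
        qed
        have jn: "Suc (i + K) + j < n" using j n_def by simp
        have "pr (cs ! (i + K)) (cs ! (Suc (i + K) + j))" using cs_pr jn by simp
        then show "pr z c" using trans[OF Zl[OF z] cs_lt[OF Ki] cs_lt[OF jn]] p1 j by simp
      qed
      have LoC: "?Lo \<subseteq> C" "?Hi \<subseteq> C" using set_cs by (auto dest: in_set_takeD in_set_dropD)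
      have "chain (?Lo \<union> Z \<union> ?Hi)" unfolding chain_def
      proof (intro conjI ballI impI)
        show "?Lo \<union> Z \<union> ?Hi \<subseteq> {..<m}" using LoC Cm Zl by auto
      next
        fix a b assume a: "a \<in> ?Lo \<union> Z \<union> ?Hi" and b: "b \<in> ?Lo \<union> Z \<union> ?Hi" and ab: "a \<noteq> b"
        consider (CC) "a \<in> C" "b \<in> C" | (ZZ) "a \<in> Z" "b \<in> Z" | (LZ) "a \<in> ?Lo" "b \<in> Z"
          | (ZL) "a \<in> Z" "b \<in> ?Lo" | (HZ) "a \<in> ?Hi" "b \<in> Z" | (ZH) "a \<in> Z" "b \<in> ?Hi"
          using a b LoC by blast
        then show "pr a b \<or> pr b a"
        proof cases
          case CC then show ?thesis using C ab unfolding chain_def by blast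
        next
          case ZZ then show ?thesis using Z(1) ab unfolding chain_def by blast
        next
          case LZ then show ?thesis using lo_pr by blast
        next
          case ZL then show ?thesis using lo_pr by blast
        next
          case HZ then show ?thesis using hi_pr by blast
        next
          case ZH then show ?thesis using hi_pr by blast
        qed
      qed
      hence cle: "card (?Lo \<union> Z \<union> ?Hi) \<le> card C" by (rule Cmax)
      have d1: "?Lo \<inter> Z = {}" "Z \<inter> ?Hi = {}" using ZC LoC by auto
      have d2: "?Lo \<inter> ?Hi = {}"
      proof -
        have "set (take (i - K) cs) \<inter> set (drop (i - K) cs) = {}"
          using dist_cs by (metis append_take_drop_id distinct_append)
        moreover have "set (drop (Suc (i + K)) cs) \<subseteq> set (drop (i - K) cs)"
        proof -
          have "drop (Suc (i + K)) cs = drop (Suc (i + K) - (i - K)) (drop (i - K) cs)" by simp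
          then show ?thesis by (metis set_drop_subset)
        qed
        ultimately show ?thesis by blast
      qed
      have cLo: "card ?Lo = i - K" using dist_cs i n_def by (simp add: distinct_card)
      have cHi: "card ?Hi = n - Suc (i + K)" using dist_cs n_def by (simp add: distinct_card)
      have "card (?Lo \<union> Z \<union> ?Hi) = card ?Lo + card Z + card ?Hi"
        using d1 d2 finZ by (simp add: card_Un_disjoint Int_Un_distrib2)
      hence "i - K + card Z + (n - Suc (i + K)) \<le> n" using cle cLo cHi n_card by simp
      then show "card Z \<le> 2 * K + 1" using i by linarith
    qed
    have "card ?I \<le> card (IR \<union> IL \<union> IN)"
      using split by (rule card_mono[rotated]) (simp add: IR_def IL_def IN_def finI)
    also have "\<dots> \<le> card IR + card IL + card IN" by (meson card_Un_le le_trans add_le_mono order_refl)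
    also have "\<dots> \<le> R0" using cIR cIL cIN by (simp add: R0_def)
    finally show ?thesis .
  qed
  have lenV: "length (Vs ! i) \<le> R0" if i: "i < n" for i
  proof -
    have "length (Vs ! i) = card (set (Vs ! i))" using distinct_card[OF Vs_dist[OF i]] by simp
    also have "\<dots> \<le> card (Inc (cs ! i))"
      by (rule card_mono) (use Vs_i[OF i] Vs_inc[OF i] in \<open>auto simp: Inc_def\<close>)
    also have "\<dots> \<le> R0" using deg[OF i] .
    finally show ?thesis .
  qed
  have blk_eq: "blk = (\<lambda>i. cs ! i # Vs ! i)" by (rule ext) (simp add: blk_def)
  show ?thesis
    apply (rule exI[of _ cs], rule exI[of _ Vs])
    using lVs set_cs Cm cs_pr dist_\<sigma> set_\<sigma> sorted_\<sigma> Vs_inc lenV deg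
    unfolding blk_eq by (simp add: n_def)
qed

end



context racsl
begin

lemma realizes_geo: "realizes S E Ws u w \<Longrightarrow> geo w"
proof -
  assume r: "realizes S E Ws u w"
  have ul: "u \<in> lists S" and wl: "w \<in> lists S" using r by (auto simp: realizes_def)
  have g: "\<And>v. v \<in> lists S \<Longrightarrow> cls S E (u @ v) = cls S E (u @ w) \<Longrightarrow> length w \<le> length v"
    using r unfolding realizes_def by blast
  show "geo w" unfolding geo_def
  proof (intro conjI ballI impI)
    show "w \<in> lists S" by fact
  next
    fix v assume v: "v \<in> lists S" "v \<approx> w"
    have "u @ v \<approx> u @ w" using eqv_ctx[OF v(2), of u "[]"] by simp
    then show "length w \<le> length v" using g[OF v(1)] by (simp add: cls_eq_iff)
  qed
qed

lemma conj_mul: "u \<in> lists S \<Longrightarrow> (u @ x @ rev u) @ (u @ y @ rev u) \<approx> u @ (x @ y) @ rev u"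
proof -
  assume u: "u \<in> lists S"
  have "(u @ x @ rev u) @ (u @ y @ rev u) = (u @ x) @ (rev u @ u) @ (y @ rev u)" by simp
  also have "\<dots> \<approx> (u @ x) @ [] @ (y @ rev u)" using eqv_inv'[OF u] by (rule eqv_ctx)
  finally show ?thesis by simp
qed

lemma nat_le_floor: "real x \<le> D \<Longrightarrow> x \<le> nat \<lfloor>D\<rfloor>"
proof -
  assume "real x \<le> D"
  hence "of_int (int x) \<le> D" by simp
  hence "int x \<le> \<lfloor>D\<rfloor>" by (simp only: le_floor_iff)
  then show ?thesis by simp
qed

end

context geow
begin

definition rho :: "nat \<Rightarrow> 'a list" where "rho k = take k w @ [w ! k] @ rev (take k w)"

lemma rho_lists: "k < length w \<Longrightarrow> rho k \<in> lists S"
  unfolding rho_def using take_lists nth_S lists_rev by simp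

lemma T_rho: "T k = cls S E (rho k)" by (simp add: T_def refl_at_def rho_def)

definition WI :: "nat \<Rightarrow> nat \<Rightarrow> bool" where
  "WI a b \<longleftrightarrow> T a = T b \<or> rho a @ rho b \<approx> rho b @ rho a"

lemma WI_sym: "WI a b \<Longrightarrow> WI b a"
  unfolding WI_def using eqv_sym by metis

lemma WI_T_iff:
  assumes a: "a < length w" and b: "b < length w"
  shows "walls_intersect S E (wall S E (T a)) (wall S E (T b)) \<longleftrightarrow> WI a b"
  using walls_intersect_iff[OF T_refl[OF a] T_refl[OF b]] commute_el_iff[OF rho_lists[OF a] rho_lists[OF b]]
  unfolding WI_def T_rho[of a] T_rho[of b] by simp

lemma prec_notWI:
  assumes a: "a < length w" and b: "b < length w" and p: "prec a b"
  shows "\<not> WI a b"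
proof -
  have wl: "wall_less S E (cls S E []) (wall S E (cls S E (take a w @ [w ! a] @ rev (take a w))))
      (wall S E (cls S E (take b w @ [w ! b] @ rev (take b w))))"
    using p unfolding prec_def T_def refl_at_def by simp
  have "\<not> walls_intersect S E (wall S E (cls S E (take a w @ [w ! a] @ rev (take a w))))
      (wall S E (cls S E (take b w @ [w ! b] @ rev (take b w))))"
    by (rule nested_not_intersect[OF take_lists nth_S[OF a] take_lists nth_S[OF b] wl])
  hence "\<not> walls_intersect S E (wall S E (T a)) (wall S E (T b))"
    unfolding T_def refl_at_def by simp
  then show ?thesis using WI_T_iff[OF a b] by simp
qed

lemma inc_WI:
  assumes a: "a < length w" and b: "b < length w" and ab: "a \<noteq> b"
    and n1: "\<not> prec a b" and n2: "\<not> prec b a"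
  shows "WI a b"
proof -
  have "commute_el S E (T a) (T b)" by (rule incomparable_commute[OF a b ab n1 n2])
  then show ?thesis using commute_el_iff[OF rho_lists[OF a] rho_lists[OF b]]
    unfolding WI_def T_rho[of a] T_rho[of b] by simp
qed

lemma bnd_bpp:
  assumes bpp: "bounded_product_projections S E D (cls S E w)"
    and A: "A \<subseteq> {..<length w}" and B: "B \<subseteq> {..<length w}" and AB: "A \<inter> B = {}"
    and cross: "\<forall>a\<in>A. \<forall>b\<in>B. \<not> prec a b \<and> \<not> prec b a"
  shows "real (min (card A) (card B)) \<le> D"
proof -
  let ?f = "\<lambda>k. wall S E (T k)"
  have inj: "inj_on ?f {..<length w}"
  proof (rule inj_onI)
    fix a b assume "a \<in> {..<length w}" "b \<in> {..<length w}" "?f a = ?f b"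
    then show "a = b" using wall_inj[OF T_refl] T_inj by auto
  qed
  have injA: "inj_on ?f A" using inj_on_subset[OF inj A] .
  have injB: "inj_on ?f B" using inj_on_subset[OF inj B] .
  have sep: "\<And>k. k < length w \<Longrightarrow> ?f k \<in> sep_walls S E (cls S E []) (cls S E w)"
  proof -
    fix k assume k: "k < length w"
    have "?f k \<in> walls S E" using T_refl[OF k] by (simp add: walls_def)
    moreover have "separates S E (?f k) (cls S E []) (cls S E w)"
      using sep_iff[OF T_refl[OF k] _ wl, of "[]"] NN_w k by simp
    ultimately show "?f k \<in> sep_walls S E (cls S E []) (cls S E w)" by (simp add: sep_walls_def)
  qed
  have H: "\<And>A' B'. A' \<subseteq> sep_walls S E (cls S E []) (cls S E w) \<Longrightarrow>
      B' \<subseteq> sep_walls S E (cls S E []) (cls S E w) \<Longrightarrow> A' \<inter> B' = {} \<Longrightarrow>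
      (\<forall>a\<in>A'. \<forall>b\<in>B'. \<not> wall_less S E (cls S E []) a b \<and> \<not> wall_less S E (cls S E []) b a) \<Longrightarrow>
      real (min (card A') (card B')) \<le> D"
    using bpp unfolding bounded_product_projections_def by blast
  have "real (min (card (?f ` A)) (card (?f ` B))) \<le> D"
  proof (rule H)
    show "?f ` A \<subseteq> sep_walls S E (cls S E []) (cls S E w)" using sep A by auto
    show "?f ` B \<subseteq> sep_walls S E (cls S E []) (cls S E w)" using sep B by auto
    show "?f ` A \<inter> ?f ` B = {}"
    proof -
      have "?f ` A \<inter> ?f ` B = ?f ` (A \<inter> B)"
        using inj_on_image_Int[OF inj A B] by simp
      then show ?thesis using AB by simp
    qed
    show "\<forall>a\<in>?f ` A. \<forall>b\<in>?f ` B. \<not> wall_less S E (cls S E []) a b \<and> \<not> wall_less S E (cls S E []) b a"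
      using cross unfolding prec_def by blast
  qed
  then show ?thesis using card_image[OF injA] card_image[OF injB] by simp
qed

end

locale itin = geow S E w for S :: "'a set" and E and w +
  fixes u :: "'a list" and Ws :: "'a list set set set list"
  assumes rz: "realizes S E Ws u w"
begin

lemma ul: "u \<in> lists S" using rz by (simp add: realizes_def)
lemma lenWs: "length Ws = length w" using rz by (simp add: realizes_def)

definition Rr :: "nat \<Rightarrow> 'a list set" where "Rr k = cls S E (u @ rho k @ rev u)"

lemma Rr_refl: "k < length w \<Longrightarrow> Rr k \<in> reflections S E"
proof -
  assume k: "k < length w"
  have "Rr k = cls S E ((u @ take k w) @ [w ! k] @ rev (u @ take k w))" by (simp add: Rr_def rho_def)
  moreover have "u @ take k w \<in> lists S" using ul take_lists by simp
  ultimately show ?thesis using nth_S[OF k] unfolding reflections_def by blast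
qed

lemma Ws_wall: "k < length w \<Longrightarrow> Ws ! k = wall S E (Rr k)"
proof -
  assume k: "k < length w"
  have kW: "k < length Ws" using k lenWs by simp
  have inW: "Ws ! k \<in> walls S E" and e: "{cls S E (u @ take k w), cls S E (u @ take (Suc k) w)} \<in> Ws ! k"
    using rz kW unfolding realizes_def by auto
  obtain r where r: "r \<in> reflections S E" "Ws ! k = wall S E r" using inW by (auto simp: walls_def)
  have ts: "take (Suc k) w = take k w @ [w ! k]" using k by (simp add: take_Suc_conv_app_nth)
  have l: "u @ take k w \<in> lists S" using ul take_lists by simp
  have "{cls S E (u @ take k w), cls S E ((u @ take k w) @ [w ! k])} \<in> wall S E r" using e r ts by simp
  hence "cls S E ((u @ take k w) @ [w ! k] @ rev (u @ take k w)) = r"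
    using edge_in_wall_iff[OF l nth_S[OF k]] by blast
  hence "Rr k = r" by (simp add: Rr_def rho_def)
  then show ?thesis using r by simp
qed

lemma WI_iff:
  assumes a: "a < length w" and b: "b < length w"
  shows "walls_intersect S E (Ws ! a) (Ws ! b) \<longleftrightarrow> WI a b"
proof -
  have la: "u @ rho a @ rev u \<in> lists S" and lb: "u @ rho b @ rev u \<in> lists S"
    using ul rho_lists a b lists_rev by auto
  have eq: "Rr a = Rr b \<longleftrightarrow> T a = T b"
  proof -
    have "Rr a = Rr b \<longleftrightarrow> u @ rho a @ rev u \<approx> u @ rho b @ rev u" by (simp add: Rr_def cls_eq_iff)
    also have "\<dots> \<longleftrightarrow> rho a \<approx> rho b" using conj_cancel[OF ul] conj_eqv by blast
    also have "\<dots> \<longleftrightarrow> T a = T b" by (simp add: T_rho cls_eq_iff)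
    finally show ?thesis .
  qed
  have cm: "commute_el S E (Rr a) (Rr b) \<longleftrightarrow> rho a @ rho b \<approx> rho b @ rho a"
  proof -
    have "commute_el S E (Rr a) (Rr b) \<longleftrightarrow>
        (u @ rho a @ rev u) @ (u @ rho b @ rev u) \<approx> (u @ rho b @ rev u) @ (u @ rho a @ rev u)"
      unfolding Rr_def by (rule commute_el_iff[OF la lb])
    also have "\<dots> \<longleftrightarrow> u @ (rho a @ rho b) @ rev u \<approx> u @ (rho b @ rho a) @ rev u"
    proof -
      have c1: "(u @ rho a @ rev u) @ (u @ rho b @ rev u) \<approx> u @ (rho a @ rho b) @ rev u" by (rule conj_mul[OF ul])
      have c2: "(u @ rho b @ rev u) @ (u @ rho a @ rev u) \<approx> u @ (rho b @ rho a) @ rev u" by (rule conj_mul[OF ul])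
      show ?thesis using c1 c2 eqv_sym eqv_trans by meson
    qed
    also have "\<dots> \<longleftrightarrow> rho a @ rho b \<approx> rho b @ rho a" using conj_cancel[OF ul] conj_eqv by blast
    finally show ?thesis .
  qed
  show ?thesis unfolding Ws_wall[OF a] Ws_wall[OF b] walls_intersect_iff[OF Rr_refl[OF a] Rr_refl[OF b]]
    using eq cm by (simp add: WI_def)
qed

lemma refl_at_conj:
  assumes "refl_at [] v j = refl_at [] v' j'"
  shows "refl_at u v j = refl_at u v' j'"
proof -
  have "take j v @ [v ! j] @ rev (take j v) \<approx> take j' v' @ [v' ! j'] @ rev (take j' v')"
    using assms by (simp add: refl_at_def cls_eq_iff)
  hence "u @ (take j v @ [v ! j] @ rev (take j v)) @ rev u \<approx> u @ (take j' v' @ [v' ! j'] @ rev (take j' v')) @ rev u"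
    by (rule eqv_ctx)
  then show ?thesis by (simp add: refl_at_def cls_eq_iff)
qed

lemma main:
  assumes bpp: "bounded_product_projections S E D (cls S E w)" and K: "K = nat \<lfloor>D\<rfloor>"
  shows "\<exists>n Wl Vl U.
          length Wl = n \<and> length Vl = n \<and>
          U = concat (map (\<lambda>i. Wl ! i # Vl ! i) [0..<n]) \<and>
          itinerary S E U \<and> itin_equiv S E Ws U \<and>
          (\<forall>i<n. real (length (Vl ! i)) \<le> real (2 * K + (2 * K + 1) * (2 * K + 1))) \<and>
          (\<forall>i<n. \<forall>V\<in>set (Vl ! i). walls_intersect S E V (Wl ! i)) \<and>
          (\<forall>i<n. \<forall>j<n. i \<noteq> j \<longrightarrow> \<not> walls_intersect S E (Wl ! i) (Wl ! j)) \<and>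
          (\<forall>i<n. real (card {V \<in> set U. V \<noteq> Wl ! i \<and> walls_intersect S E V (Wl ! i)})
              \<le> real (2 * K + (2 * K + 1) * (2 * K + 1)))"
proof -
  let ?m = "length w"
  interpret cp: cposet ?m prec K
  proof
    fix k assume "k < ?m" then show "\<not> prec k k" by (rule prec_irrefl)
  next
    fix k l q assume "k < ?m" "l < ?m" "q < ?m" "prec k l" "prec l q"
    then show "prec k q" by (rule prec_trans)
  next
    fix k l assume "k < ?m" "l < ?m" "prec k l"
    then show "k < l" by (rule prec_less)
  next
    fix A B assume "A \<subseteq> {..<?m}" "B \<subseteq> {..<?m}" "A \<inter> B = {}" "\<forall>a\<in>A. \<forall>b\<in>B. \<not> prec a b \<and> \<not> prec b a"
    then have "real (min (card A) (card B)) \<le> D" using bnd_bpp[OF bpp] by blast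
    then show "min (card A) (card B) \<le> K" unfolding K by (rule nat_le_floor)
  qed
  obtain cs Vs where dec: "length Vs = length cs" "set cs \<subseteq> {..<?m}"
    "\<forall>i j. i < j \<longrightarrow> j < length cs \<longrightarrow> prec (cs ! i) (cs ! j)"
    "distinct (concat (map (\<lambda>i. cs ! i # Vs ! i) [0..<length cs]))"
    "set (concat (map (\<lambda>i. cs ! i # Vs ! i) [0..<length cs])) = {..<?m}"
    "sorted_wrt (\<lambda>u v. \<not> prec v u) (concat (map (\<lambda>i. cs ! i # Vs ! i) [0..<length cs]))"
    "\<forall>i<length cs. \<forall>v\<in>set (Vs ! i). cp.inc v (cs ! i)"
    "\<forall>i<length cs. length (Vs ! i) \<le> cp.R0"
    "\<forall>i<length cs. card (cp.Inc (cs ! i)) \<le> cp.R0"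
    using cp.decomposition by blast
  let ?R = "real (2 * K + (2 * K + 1) * (2 * K + 1))"
  have R0: "real cp.R0 = ?R" by (simp add: cp.R0_def)
  let ?n = "length cs"
  let ?\<sigma> = "concat (map (\<lambda>i. cs ! i # Vs ! i) [0..<?n])"
  let ?f = "\<lambda>k. Ws ! k"
  define Wl where "Wl = map ?f cs"
  define Vl where "Vl = map (map ?f) Vs"
  define U where "U = map ?f ?\<sigma>"
  have lWl: "length Wl = ?n" by (simp add: Wl_def)
  have lVl: "length Vl = ?n" using dec(1) by (simp add: Vl_def)
  have Ueq: "U = concat (map (\<lambda>i. Wl ! i # Vl ! i) [0..<?n])"
  proof -
    have "U = concat (map (map ?f) (map (\<lambda>i. cs ! i # Vs ! i) [0..<?n]))" by (simp add: U_def map_concat)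
    also have "map (map ?f) (map (\<lambda>i. cs ! i # Vs ! i) [0..<?n]) = map (\<lambda>i. Wl ! i # Vl ! i) [0..<?n]"
      using dec(1) by (auto simp: Wl_def Vl_def)
    finally show ?thesis .
  qed
  have cs_lt: "\<And>i. i < ?n \<Longrightarrow> cs ! i < ?m" using dec(2) nth_mem by blast
  have Vs_lt: "\<And>i v. i < ?n \<Longrightarrow> v \<in> set (Vs ! i) \<Longrightarrow> v < ?m"
  proof -
    fix i v assume i: "i < ?n" and v: "v \<in> set (Vs ! i)"
    have "v \<in> set ?\<sigma>" using i v by force
    then show "v < ?m" using dec(5) by auto
  qed
  have r: "realiz ?\<sigma>" by (rule realiz_linext[OF dec(4) dec(5) dec(6)])
  have lsig: "length ?\<sigma> = ?m" using realiz_length[OF r] .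
  have wdl: "wd ?\<sigma> \<in> lists S" using wd_lists dec(5) by simp
  have wdeq: "wd ?\<sigma> \<approx> w" using r by (simp add: realiz_def)
  have lwd: "length (wd ?\<sigma>) = ?m" using lsig by (simp add: wd_def)
  have sig_lt: "\<And>j. j < ?m \<Longrightarrow> ?\<sigma> ! j < ?m" using realiz_set_lt[OF r] .
  have Rsig: "\<And>j. j < ?m \<Longrightarrow> refl_at [] (wd ?\<sigma>) j = T (?\<sigma> ! j)" using r by (simp add: realiz_def)
  have uwd: "cls S E (u @ wd ?\<sigma>) = cls S E (u @ w)"
    using eqv_ctx[OF wdeq, of u "[]"] by (simp add: cls_eq_iff)
  have realU: "realizes S E U u (wd ?\<sigma>)" unfolding realizes_def
  proof (intro conjI allI impI ballI)
    show "u \<in> lists S" by (rule ul)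
    show "wd ?\<sigma> \<in> lists S" by (rule wdl)
    show "length (wd ?\<sigma>) = length U" using lwd lsig by (simp add: U_def)
  next
    fix j assume j: "j < length U"
    hence j': "j < ?m" using lsig by (simp add: U_def)
    have Uj: "U ! j = Ws ! (?\<sigma> ! j)" using j by (simp add: U_def)
    show "U ! j \<in> walls S E" unfolding Uj Ws_wall[OF sig_lt[OF j']] using Rr_refl[OF sig_lt[OF j']]
      by (simp add: walls_def)
    have l: "u @ take j (wd ?\<sigma>) \<in> lists S" using ul wdl lists_take by simp
    have s: "wd ?\<sigma> ! j \<in> S" using wdl lwd j' lists_nth by simp
    have ts: "take (Suc j) (wd ?\<sigma>) = take j (wd ?\<sigma>) @ [wd ?\<sigma> ! j]" using lwd j' by (simp add: take_Suc_conv_app_nth)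
    have "refl_at u (wd ?\<sigma>) j = refl_at u w (?\<sigma> ! j)"
      by (rule refl_at_conj) (simp add: Rsig[OF j'] T_def)
    also have "refl_at u w (?\<sigma> ! j) = Rr (?\<sigma> ! j)" by (simp add: Rr_def rho_def refl_at_def)
    finally have "cls S E ((u @ take j (wd ?\<sigma>)) @ [wd ?\<sigma> ! j] @ rev (u @ take j (wd ?\<sigma>))) = Rr (?\<sigma> ! j)"
      by (simp add: refl_at_def)
    hence "{cls S E (u @ take j (wd ?\<sigma>)), cls S E ((u @ take j (wd ?\<sigma>)) @ [wd ?\<sigma> ! j])} \<in> wall S E (Rr (?\<sigma> ! j))"
      using edge_in_wall_iff[OF l s] by blast
    then show "{cls S E (u @ take j (wd ?\<sigma>)), cls S E (u @ take (Suc j) (wd ?\<sigma>))} \<in> U ! j"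
      unfolding Uj Ws_wall[OF sig_lt[OF j']] ts by simp
  next
    fix v assume v: "v \<in> lists S" "cls S E (u @ v) = cls S E (u @ wd ?\<sigma>)"
    have "length w \<le> length v" using rz v uwd unfolding realizes_def by auto
    then show "length (wd ?\<sigma>) \<le> length v" using lwd by simp
  qed
  have itU: "itinerary S E U" using realU by (auto simp: itinerary_def)
  have eqU: "itin_equiv S E Ws U"
    unfolding itin_equiv_def joins_def using rz realU uwd by blast
  have setU: "set U = ?f ` {..<?m}" using dec(5) by (simp add: U_def)
  have a: "\<forall>i<?n. real (length (Vl ! i)) \<le> ?R"
    using dec(8) dec(1) R0 by (auto simp: Vl_def)
  have b: "\<forall>i<?n. \<forall>V\<in>set (Vl ! i). walls_intersect S E V (Wl ! i)"
  proof (intro allI impI ballI)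
    fix i V assume i: "i < ?n" and V: "V \<in> set (Vl ! i)"
    then obtain v where v: "v \<in> set (Vs ! i)" "V = Ws ! v" using dec(1) by (auto simp: Vl_def)
    have inc: "cp.inc v (cs ! i)" using dec(7) i v(1) by blast
    have vl: "v < ?m" using Vs_lt[OF i v(1)] .
    have "WI v (cs ! i)" using inc_WI[OF vl cs_lt[OF i]] inc by (simp add: cp.inc_def)
    then show "walls_intersect S E V (Wl ! i)"
      using WI_iff[OF vl cs_lt[OF i]] v i by (simp add: Wl_def)
  qed
  have c: "\<forall>i<?n. \<forall>j<?n. i \<noteq> j \<longrightarrow> \<not> walls_intersect S E (Wl ! i) (Wl ! j)"
  proof (intro allI impI)
    fix i j assume i: "i < ?n" and j: "j < ?n" and ij: "i \<noteq> j"
    have "prec (cs ! i) (cs ! j) \<or> prec (cs ! j) (cs ! i)" using dec(3) i j ij by (metis linorder_neqE_nat)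
    hence "\<not> WI (cs ! i) (cs ! j)"
      using prec_notWI[OF cs_lt[OF i] cs_lt[OF j]] prec_notWI[OF cs_lt[OF j] cs_lt[OF i]] WI_sym by blast
    then show "\<not> walls_intersect S E (Wl ! i) (Wl ! j)"
      using WI_iff[OF cs_lt[OF i] cs_lt[OF j]] i j by (simp add: Wl_def)
  qed
  have d: "\<forall>i<?n. real (card {V \<in> set U. V \<noteq> Wl ! i \<and> walls_intersect S E V (Wl ! i)}) \<le> ?R"
  proof (intro allI impI)
    fix i assume i: "i < ?n"
    let ?c = "cs ! i"
    have ci: "?c < ?m" using cs_lt[OF i] .
    have sub: "{V \<in> set U. V \<noteq> Wl ! i \<and> walls_intersect S E V (Wl ! i)} \<subseteq> ?f ` cp.Inc ?c"
    proof
      fix V assume V: "V \<in> {V \<in> set U. V \<noteq> Wl ! i \<and> walls_intersect S E V (Wl ! i)}"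
      then obtain k where k: "k < ?m" "V = Ws ! k" using setU by auto
      have Wli: "Wl ! i = Ws ! ?c" using i by (simp add: Wl_def)
      have kc: "k \<noteq> ?c" using V k Wli by auto
      have "WI k ?c" using V k Wli WI_iff[OF k(1) ci] by simp
      hence "\<not> prec k ?c" "\<not> prec ?c k"
        using prec_notWI[OF k(1) ci] prec_notWI[OF ci k(1)] WI_sym by blast+
      hence "k \<in> cp.Inc ?c" using k kc by (simp add: cp.Inc_def cp.inc_def)
      then show "V \<in> ?f ` cp.Inc ?c" using k by blast
    qed
    have finI: "finite (cp.Inc ?c)" by (simp add: cp.Inc_def)
    have "card {V \<in> set U. V \<noteq> Wl ! i \<and> walls_intersect S E V (Wl ! i)} \<le> card (?f ` cp.Inc ?c)"
      by (rule card_mono[OF finite_imageI[OF finI] sub])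
    also have "\<dots> \<le> card (cp.Inc ?c)" by (rule card_image_le[OF finI])
    also have "\<dots> \<le> cp.R0" using dec(9) i by blast
    finally show "real (card {V \<in> set U. V \<noteq> Wl ! i \<and> walls_intersect S E V (Wl ! i)}) \<le> ?R"
      using R0 by linarith
  qed
  show ?thesis
    apply (rule exI[of _ ?n], rule exI[of _ Wl], rule exI[of _ Vl], rule exI[of _ U])
    using lWl lVl Ueq itU eqU a b c d by blast
qed

end

theorem proposition3p4:
  shows "\<forall>D::real. D > 0 \<longrightarrow> (\<exists>R::real. R > 0 \<and>
    (\<forall>(S :: nat set) E \<gamma> Ws.
       racs S E \<longrightarrow> \<gamma> \<in> grp S E \<longrightarrow> bounded_product_projections S E D \<gamma> \<longrightarrow>
       itinerary S E Ws \<longrightarrow> traverses S E Ws \<gamma> \<longrightarrow>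
       (\<exists>n Wl Vl U.
          length Wl = n \<and> length Vl = n \<and>
          U = concat (map (\<lambda>i. Wl ! i # Vl ! i) [0..<n]) \<and>
          itinerary S E U \<and> itin_equiv S E Ws U \<and>
          (\<forall>i<n. real (length (Vl ! i)) \<le> R) \<and>
          (\<forall>i<n. \<forall>V\<in>set (Vl ! i). walls_intersect S E V (Wl ! i)) \<and>
          (\<forall>i<n. \<forall>j<n. i \<noteq> j \<longrightarrow> \<not> walls_intersect S E (Wl ! i) (Wl ! j)) \<and>
          (\<forall>i<n. real (card {V \<in> set U. V \<noteq> Wl ! i \<and> walls_intersect S E V (Wl ! i)}) \<le> R))))"
proof (intro allI impI)
  fix D :: real assume "D > 0"
  define K where "K = nat \<lfloor>D\<rfloor>"
  let ?R = "real (2 * K + (2 * K + 1) * (2 * K + 1))"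
  show "\<exists>R::real. R > 0 \<and> (\<forall>(S :: nat set) E \<gamma> Ws.
       racs S E \<longrightarrow> \<gamma> \<in> grp S E \<longrightarrow> bounded_product_projections S E D \<gamma> \<longrightarrow>
       itinerary S E Ws \<longrightarrow> traverses S E Ws \<gamma> \<longrightarrow>
       (\<exists>n Wl Vl U.
          length Wl = n \<and> length Vl = n \<and>
          U = concat (map (\<lambda>i. Wl ! i # Vl ! i) [0..<n]) \<and>
          itinerary S E U \<and> itin_equiv S E Ws U \<and>
          (\<forall>i<n. real (length (Vl ! i)) \<le> R) \<and>
          (\<forall>i<n. \<forall>V\<in>set (Vl ! i). walls_intersect S E V (Wl ! i)) \<and>
          (\<forall>i<n. \<forall>j<n. i \<noteq> j \<longrightarrow> \<not> walls_intersect S E (Wl ! i) (Wl ! j)) \<and>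
          (\<forall>i<n. real (card {V \<in> set U. V \<noteq> Wl ! i \<and> walls_intersect S E V (Wl ! i)}) \<le> R)))"
  proof (rule exI[of _ ?R], intro conjI allI impI)
    show "?R > 0" unfolding of_nat_0_less_iff by simp
  next
    fix S :: "nat set" and E \<gamma> Ws
    assume rc: "racs S E" and g: "\<gamma> \<in> grp S E" and bpp: "bounded_product_projections S E D \<gamma>"
      and it: "itinerary S E Ws" and tr: "traverses S E Ws \<gamma>"
    interpret racsl S E using rc unfolding racs_def by unfold_locales blast+
    obtain u w where uw: "realizes S E Ws u w" "cls S E w = \<gamma>" using tr by (auto simp: traverses_def)
    have gw: "geo w" by (rule realizes_geo[OF uw(1)])
    interpret itin S E w u Ws by unfold_locales (use gw uw(1) in auto)
    have bpp': "bounded_product_projections S E D (cls S E w)" using bpp uw(2) by simp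
    show "\<exists>n Wl Vl U.
          length Wl = n \<and> length Vl = n \<and>
          U = concat (map (\<lambda>i. Wl ! i # Vl ! i) [0..<n]) \<and>
          itinerary S E U \<and> itin_equiv S E Ws U \<and>
          (\<forall>i<n. real (length (Vl ! i)) \<le> ?R) \<and>
          (\<forall>i<n. \<forall>V\<in>set (Vl ! i). walls_intersect S E V (Wl ! i)) \<and>
          (\<forall>i<n. \<forall>j<n. i \<noteq> j \<longrightarrow> \<not> walls_intersect S E (Wl ! i) (Wl ! j)) \<and>
          (\<forall>i<n. real (card {V \<in> set U. V \<noteq> Wl ! i \<and> walls_intersect S E V (Wl ! i)}) \<le> ?R)"
      by (rule main[OF bpp' K_def])
  qed
qed


end
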